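(* Let $\mathcal M$ and $\mathcal N$ be quantum channels satisfying $s$-detailed balance with respect to $\rho_\beta$. Then $\mathcal M\circ\mathcal N\circ\mathcal M$ also satisfies $s$-detailed balance with respect to $\rho_\beta$. Moreover, if $\mathcal N$ has $\rho_\beta$ as its unique fixed point and its spectrum is contained in $[0,1]$, then $\mathcal M\circ\mathcal N\circ\mathcal M$ also has $\rho_\beta$ as its unique fixed point and its spectrum lies in $[0,1]$.
   Context: Let $H$ be a Hermitian operator on $n$ qubits, $\beta>0$, $\rho_\beta=e^{-\beta H}/\operatorname{tr}(e^{-\beta H})$. A quantum channel is a CPTP map $\mathcal T(X)=\sum_uK_uXK_u^\dagger$ with dual $\mathcal T^\dagger(X)=\sum_uK_u^\dagger XK_u$. For $s\in[0,1]$, $\langle A,B\rangle_s=\operatorname{tr}(A^\dagger\rho_\beta^{1-s}B\rho_\beta^s)$; $\mathcal T$ satisfies $s$-detailed balance w.r.t. $\rho_\beta$ if $\langle A,\mathcal T^\dagger(B)\rangle_s=\langle\mathcal T^\dagger(A),B\rangle_s$ for all matrices $A,B$. Spectrum = set of eigenvalues of the channel as a linear map on $2^n\times2^n$ matrices; a fixed point is a state $\sigma$ with $\mathcal T(\sigma)=\sigma$. *)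

theory Defs
  imports Complex_Main "Jordan_Normal_Form.Matrix"
begin

definition adj :: "complex mat \<Rightarrow> complex mat" where
  "adj A = mat (dim_col A) (dim_row A) (\<lambda>(i,j). cnj (A $$ (j,i)))"

definition mtrace :: "complex mat \<Rightarrow> complex" where
  "mtrace A = (\<Sum>i<dim_row A. A $$ (i,i))"

definition hermitian :: "complex mat \<Rightarrow> bool" where
  "hermitian A \<longleftrightarrow> A \<in> carrier_mat (dim_row A) (dim_row A) \<and> adj A = A"

definition unitary :: "nat \<Rightarrow> complex mat \<Rightarrow> bool" where
  "unitary d U \<longleftrightarrow> U \<in> carrier_mat d d \<and> adj U * U = 1\<^sub>m d \<and> U * adj U = 1\<^sub>m d"

definition diag_of :: "complex list \<Rightarrow> complex mat" where
  "diag_of xs = mat (length xs) (length xs) (\<lambda>(i,j). if i = j then xs ! i else 0)"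

definition mat_fun :: "(real \<Rightarrow> real) \<Rightarrow> complex mat \<Rightarrow> complex mat" where
  "mat_fun f A = (let d = dim_row A;
      (U, ls) = (SOME (U, ls). unitary d U \<and> length ls = d \<and>
                   A = U * diag_of (map complex_of_real ls) * adj U)
    in U * diag_of (map (\<lambda>x. complex_of_real (f x)) ls) * adj U)"

definition gibbs :: "real \<Rightarrow> complex mat \<Rightarrow> complex mat" where
  "gibbs \<beta> H = (1 / mtrace (mat_fun (\<lambda>x. exp (- \<beta> * x)) H)) \<cdot>\<^sub>m mat_fun (\<lambda>x. exp (- \<beta> * x)) H"

definition mat_rpow :: "complex mat \<Rightarrow> real \<Rightarrow> complex mat" where
  "mat_rpow \<rho> t = mat_fun (\<lambda>x. x powr t) \<rho>"

definition msum :: "nat \<Rightarrow> complex mat list \<Rightarrow> complex mat" where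
  "msum d xs = foldr (+) xs (0\<^sub>m d d)"

definition kraus_rep :: "nat \<Rightarrow> complex mat list \<Rightarrow> (complex mat \<Rightarrow> complex mat) \<Rightarrow> bool" where
  "kraus_rep d Ks T \<longleftrightarrow> (\<forall>K\<in>set Ks. K \<in> carrier_mat d d) \<and>
     msum d (map (\<lambda>K. adj K * K) Ks) = 1\<^sub>m d \<and>
     (\<forall>X\<in>carrier_mat d d. T X = msum d (map (\<lambda>K. K * X * adj K) Ks))"

definition quantum_channel :: "nat \<Rightarrow> (complex mat \<Rightarrow> complex mat) \<Rightarrow> bool" where
  "quantum_channel d T \<longleftrightarrow> (\<exists>Ks. kraus_rep d Ks T)"

definition channel_dual :: "nat \<Rightarrow> (complex mat \<Rightarrow> complex mat) \<Rightarrow> complex mat \<Rightarrow> complex mat" where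
  "channel_dual d T X = (let Ks = (SOME Ks. kraus_rep d Ks T) in msum d (map (\<lambda>K. adj K * X * K) Ks))"

definition s_inner :: "complex mat \<Rightarrow> real \<Rightarrow> complex mat \<Rightarrow> complex mat \<Rightarrow> complex" where
  "s_inner \<rho> s A B = mtrace (adj A * mat_rpow \<rho> (1 - s) * B * mat_rpow \<rho> s)"

definition detailed_balance :: "nat \<Rightarrow> complex mat \<Rightarrow> real \<Rightarrow> (complex mat \<Rightarrow> complex mat) \<Rightarrow> bool" where
  "detailed_balance d \<rho> s T \<longleftrightarrow>
     (\<forall>A\<in>carrier_mat d d. \<forall>B\<in>carrier_mat d d.
        s_inner \<rho> s A (channel_dual d T B) = s_inner \<rho> s (channel_dual d T A) B)"

definition is_state :: "nat \<Rightarrow> complex mat \<Rightarrow> bool" where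
  "is_state d \<sigma> \<longleftrightarrow> \<sigma> \<in> carrier_mat d d \<and> adj \<sigma> = \<sigma> \<and> mtrace \<sigma> = 1 \<and>
     (\<forall>v\<in>carrier_vec d. \<exists>r::real. r \<ge> 0 \<and> map_vec cnj v \<bullet> (\<sigma> *\<^sub>v v) = complex_of_real r)"

definition fixed_points :: "nat \<Rightarrow> (complex mat \<Rightarrow> complex mat) \<Rightarrow> complex mat set" where
  "fixed_points d T = {\<sigma>. is_state d \<sigma> \<and> T \<sigma> = \<sigma>}"

definition channel_spectrum :: "nat \<Rightarrow> (complex mat \<Rightarrow> complex mat) \<Rightarrow> complex set" where
  "channel_spectrum d T = {c. \<exists>X\<in>carrier_mat d d. X \<noteq> 0\<^sub>m d d \<and> T X = c \<cdot>\<^sub>m X}"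

end

theory Submission
  imports Defs "Jordan_Normal_Form.Spectral_Radius" "Jordan_Normal_Form.Schur_Decomposition"
begin


lemma adj_dim[simp]: "dim_row (adj A) = dim_col A" "dim_col (adj A) = dim_row A"
  by (auto simp: adj_def)

lemma adj_index[simp]: "i < dim_col A \<Longrightarrow> j < dim_row A \<Longrightarrow> adj A $$ (i,j) = cnj (A $$ (j,i))"
  by (auto simp: adj_def)

lemma adj_carrier[simp]: "A \<in> carrier_mat nr nc \<Longrightarrow> adj A \<in> carrier_mat nc nr"
  by (auto simp: adj_def)

lemma adj_adj[simp]: "adj (adj A) = A"
  by (rule eq_matI) auto

lemma adj_mult: assumes "A \<in> carrier_mat nr n" "B \<in> carrier_mat n nc"
  shows "adj (A * B) = adj B * adj A"
  using assms by (intro eq_matI) (auto simp: scalar_prod_def row_def col_def intro!: sum.cong)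

lemma adj_add: assumes "A \<in> carrier_mat nr nc" "B \<in> carrier_mat nr nc"
  shows "adj (A + B) = adj A + adj B"
  using assms by (intro eq_matI) auto

lemma adj_minus: assumes "A \<in> carrier_mat nr nc" "B \<in> carrier_mat nr nc"
  shows "adj (A - B) = adj A - adj B"
  using assms by (intro eq_matI) auto

lemma adj_smult: "adj (c \<cdot>\<^sub>m A) = cnj c \<cdot>\<^sub>m adj A"
  by (intro eq_matI) auto

lemma adj_one[simp]: "adj (1\<^sub>m n) = 1\<^sub>m n"
  by (intro eq_matI) auto

lemma adj_zero[simp]: "adj (0\<^sub>m n m) = 0\<^sub>m m n"
  by (intro eq_matI) auto

definition ip :: "complex vec \<Rightarrow> complex vec \<Rightarrow> complex" where
  "ip v w = (\<Sum>i\<in>{0..<dim_vec v}. cnj (v $ i) * w $ i)"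

lemma ip_self_real: "ip v v = of_real (\<Sum>i\<in>{0..<dim_vec v}. (cmod (v $ i))^2)"
  unfolding ip_def of_real_sum by (intro sum.cong refl) (metis complex_norm_square mult.commute)

lemma ip_self_ge0: "0 \<le> (\<Sum>i\<in>{0..<dim_vec v}. (cmod (v $ i))^2)"
  by (intro sum_nonneg) auto

lemma ip_self_zero: assumes "(\<Sum>i\<in>{0..<dim_vec v}. (cmod (v $ i))^2) = 0"
  shows "v = 0\<^sub>v (dim_vec v)"
proof -
  have "\<forall>i\<in>{0..<dim_vec v}. (cmod (v $ i))^2 = 0"
    using assms by (subst sum_nonneg_eq_0_iff[symmetric]) auto
  then show ?thesis by (intro eq_vecI) auto
qed

lemma ip_mult_adj: assumes "A \<in> carrier_mat nr nc" "v \<in> carrier_vec nr" "w \<in> carrier_vec nc"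
  shows "ip v (A *\<^sub>v w) = ip (adj A *\<^sub>v v) w"
proof -
  have "ip v (A *\<^sub>v w) = (\<Sum>i\<in>{0..<nr}. \<Sum>k\<in>{0..<nc}. cnj (v $ i) * A $$ (i,k) * w $ k)"
    using assms by (simp add: ip_def scalar_prod_def row_def sum_distrib_left mult.assoc)
  also have "\<dots> = (\<Sum>k\<in>{0..<nc}. \<Sum>i\<in>{0..<nr}. cnj (v $ i) * A $$ (i,k) * w $ k)"
    by (rule sum.swap)
  also have "\<dots> = ip (adj A *\<^sub>v v) w"
    using assms by (simp add: ip_def scalar_prod_def row_def sum_distrib_left sum_distrib_right ac_simps)
  finally show ?thesis .
qed

lemma unitary_carrier: "unitary d U \<Longrightarrow> U \<in> carrier_mat d d" by (simp add: unitary_def)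

lemma unitary_mult: assumes "unitary d U" "unitary d V" shows "unitary d (U * V)"
proof -
  have U: "U \<in> carrier_mat d d" "adj U * U = 1\<^sub>m d" "U * adj U = 1\<^sub>m d" using assms unfolding unitary_def by auto
  have V: "V \<in> carrier_mat d d" "adj V * V = 1\<^sub>m d" "V * adj V = 1\<^sub>m d" using assms unfolding unitary_def by auto
  have a: "adj (U * V) = adj V * adj U" using U V adj_mult by blast
  have e1: "adj U * (U * V) = V"
    using U V by (subst assoc_mult_mat[symmetric, of "adj U" d d U d V d]) auto
  have "adj V * adj U * (U * V) = adj V * (adj U * (U * V))"
    using U V by (intro assoc_mult_mat) auto
  also have "\<dots> = 1\<^sub>m d" using U V e1 by simp
  finally have 1: "adj (U * V) * (U * V) = 1\<^sub>m d" using a by simp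
  have e2: "V * (adj V * adj U) = adj U"
    using U V by (subst assoc_mult_mat[symmetric, of V d d "adj V" d "adj U" d]) auto
  have "U * V * (adj V * adj U) = U * (V * (adj V * adj U))"
    using U V by (intro assoc_mult_mat) auto
  also have "\<dots> = 1\<^sub>m d" using U V e2 by simp
  finally have 2: "U * V * adj (U * V) = 1\<^sub>m d" using a by simp
  show ?thesis unfolding unitary_def using 1 2 U V by auto
qed

lemma unitary_adj: assumes "unitary d U" shows "unitary d (adj U)"
  using assms unfolding unitary_def by auto

lemma unitary_one: "unitary d (1\<^sub>m d)" unfolding unitary_def by auto

definition ext1 :: "complex \<Rightarrow> complex mat \<Rightarrow> complex mat" where
  "ext1 c X = mat (Suc (dim_row X)) (Suc (dim_col X))
     (\<lambda>(i,j). if i = 0 then (if j = 0 then c else 0) else if j = 0 then 0 else X $$ (i - 1, j - 1))"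

lemma ext1_carrier[simp]: "X \<in> carrier_mat m k \<Longrightarrow> ext1 c X \<in> carrier_mat (Suc m) (Suc k)"
  by (auto simp: ext1_def)

lemma ext1_dim[simp]: "dim_row (ext1 c X) = Suc (dim_row X)" "dim_col (ext1 c X) = Suc (dim_col X)"
  by (auto simp: ext1_def)

lemma ext1_index: "i < Suc (dim_row X) \<Longrightarrow> j < Suc (dim_col X) \<Longrightarrow> ext1 c X $$ (i,j) =
   (if i = 0 then (if j = 0 then c else 0) else if j = 0 then 0 else X $$ (i - 1, j - 1))"
  by (auto simp: ext1_def)

lemma ext1_mult: assumes "X \<in> carrier_mat m k" "Y \<in> carrier_mat k l"
  shows "ext1 a X * ext1 b Y = ext1 (a * b) (X * Y)"
proof (rule eq_matI)
  fix i j assume ij: "i < dim_row (ext1 (a * b) (X * Y))" "j < dim_col (ext1 (a * b) (X * Y))"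
  have "(ext1 a X * ext1 b Y) $$ (i,j) = (\<Sum>t\<in>{0..<Suc k}. ext1 a X $$ (i,t) * ext1 b Y $$ (t,j))"
    using assms ij by (simp add: scalar_prod_def row_def col_def)
  also have "\<dots> = ext1 a X $$ (i,0) * ext1 b Y $$ (0,j) + (\<Sum>t\<in>{0..<k}. ext1 a X $$ (i,Suc t) * ext1 b Y $$ (Suc t,j))"
    by (simp add: sum.atLeast0_lessThan_Suc_shift del: sum.op_ivl_Suc)
  also have "\<dots> = ext1 (a * b) (X * Y) $$ (i,j)"
    using assms ij by (cases i; cases j) (auto simp: ext1_index scalar_prod_def row_def col_def)
  finally show "(ext1 a X * ext1 b Y) $$ (i,j) = ext1 (a * b) (X * Y) $$ (i,j)" .
qed (use assms in auto)

lemma ext1_adj: "adj (ext1 c X) = ext1 (cnj c) (adj X)"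
  by (rule eq_matI) (auto simp: ext1_index)

lemma ext1_one: "ext1 1 (1\<^sub>m m) = 1\<^sub>m (Suc m)"
  by (rule eq_matI) (auto simp: ext1_index)

lemma ext1_diag: "diag_of (c # ls) = ext1 c (diag_of ls)"
  by (rule eq_matI) (auto simp: ext1_index diag_of_def nth_Cons')

lemma diag_of_carrier[simp]: "diag_of ls \<in> carrier_mat (length ls) (length ls)"
  by (simp add: diag_of_def)

lemma unitary_ext1: assumes "unitary m W" shows "unitary (Suc m) (ext1 1 W)"
  using assms unfolding unitary_def
  by (auto simp: ext1_adj ext1_mult[of _ m m _ m] ext1_one)

definition vnorm :: "complex vec \<Rightarrow> real" where
  "vnorm v = sqrt (\<Sum>i\<in>{0..<dim_vec v}. (cmod (v $ i))^2)"

lemma ip_vnorm: "ip v v = of_real ((vnorm v)^2)"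
  unfolding vnorm_def using ip_self_real ip_self_ge0 by simp

lemma vnorm_pos: assumes "v \<in> carrier_vec n" "v \<noteq> 0\<^sub>v n" shows "vnorm v > 0"
proof -
  have "(\<Sum>i\<in>{0..<dim_vec v}. (cmod (v $ i))^2) \<noteq> 0" using ip_self_zero[of v] assms by auto
  with ip_self_ge0[of v] show ?thesis unfolding vnorm_def by auto
qed

lemma ip_smult_left: "ip (c \<cdot>\<^sub>v v) w = cnj c * ip v w"
  by (simp add: ip_def sum_distrib_left ac_simps)

lemma ip_smult_right: "w \<in> carrier_vec n \<Longrightarrow> v \<in> carrier_vec n \<Longrightarrow> ip v (c \<cdot>\<^sub>v w) = c * ip v w"
  by (simp add: ip_def sum_distrib_left ac_simps)

lemma adj_mult_index: assumes "A \<in> carrier_mat n m" "B \<in> carrier_mat n k" "i < m" "j < k"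
  shows "(adj A * B) $$ (i,j) = ip (col A i) (col B j)"
  using assms by (simp add: ip_def scalar_prod_def row_def col_def)

lemma unitary_completion: assumes u: "u \<in> carrier_vec n" and u1: "ip u u = 1"
  shows "\<exists>U. unitary n U \<and> col U 0 = u"
proof -
  have u0: "u \<noteq> 0\<^sub>v n" using u1 u by (auto simp: ip_def)
  interpret cof_vec_space n "TYPE(complex)" .
  define b where "b = basis_completion u"
  from basis_completion[OF u u0, folded b_def]
  have dist_b: "distinct b" and indep: "\<not> lin_dep (set b)" and b: "set b \<subseteq> carrier_vec n" and hdb: "hd b = u" 
    and len_b: "length b = n" by auto
  have n: "n > 0" using u0 u by (cases n) auto
  from hdb len_b n obtain vs where bv: "b = u # vs" by (cases b, auto)
  define ws where "ws = gram_schmidt n b"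
  from gram_schmidt_result[OF b dist_b indep refl, folded ws_def]
  have ws: "set ws \<subseteq> carrier_vec n" "corthogonal ws" "length ws = n" 
    by (auto simp: len_b)
  have hdws: "hd ws = u" unfolding ws_def bv using u by simp
  have ws0: "ws ! 0 = u" using hdws ws n by (cases ws) auto
  have wsc: "ws ! j \<in> carrier_vec n" if "j < n" for j using ws that by auto
  have ipws: "ip (ws ! i) (ws ! j) = 0 \<longleftrightarrow> i \<noteq> j" if "i < n" "j < n" for i j
  proof -
    have "ip (ws ! i) (ws ! j) = ws ! j \<bullet>c ws ! i"
      using wsc[OF that(1)] wsc[OF that(2)]
      by (simp add: ip_def scalar_prod_def ac_simps)
    then show ?thesis using corthogonalD[OF ws(2)] ws(3) that by auto
  qed
  define nr where "nr j = vnorm (ws ! j)" for j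
  have nrpos: "nr j > 0" if "j < n" for j
  proof -
    have "ws ! j \<noteq> 0\<^sub>v n" using ipws[OF that that] by (auto simp: ip_def)
    then show ?thesis unfolding nr_def using vnorm_pos wsc that by auto
  qed
  have nr0: "nr 0 = 1"
  proof -
    have "of_real ((nr 0)^2) = (1::complex)" using u1 ws0 ip_vnorm unfolding nr_def by metis
    then have "(nr 0)^2 = 1" by (metis of_real_eq_1_iff)
    then show ?thesis using nrpos[OF n] by (simp add: power2_eq_1_iff)
  qed
  define U where "U = mat n n (\<lambda>(i,j). (ws ! j) $ i / of_real (nr j))"
  have U: "U \<in> carrier_mat n n" unfolding U_def by simp
  have colU: "col U j = (1 / of_real (nr j)) \<cdot>\<^sub>v ws ! j" if "j < n" for j
    using that wsc[OF that] unfolding U_def by (intro eq_vecI) auto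
  have "adj U * U = 1\<^sub>m n"
  proof (rule eq_matI)
    fix i j assume ij: "i < dim_row (1\<^sub>m n)" "j < dim_col (1\<^sub>m n)"
    then have ij: "i < n" "j < n" by auto
    have "(adj U * U) $$ (i,j) = ip (col U i) (col U j)" using adj_mult_index[OF U U ij] .
    also have "\<dots> = (1 / of_real (nr i)) * (1 / of_real (nr j)) * ip (ws ! i) (ws ! j)"
      using ij colU wsc by (simp add: ip_smult_left ip_smult_right[of _ n])
    also have "\<dots> = 1\<^sub>m n $$ (i,j)"
    proof (cases "i = j")
      case True
      have "ip (ws ! j) (ws ! j) = of_real ((nr j)^2)" unfolding nr_def by (rule ip_vnorm)
      then show ?thesis using True ij nrpos[OF ij(2)] by (simp add: power2_eq_square)
    next
      case False
      then show ?thesis using ipws[OF ij] ij by simp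
    qed
    finally show "(adj U * U) $$ (i,j) = 1\<^sub>m n $$ (i,j)" .
  qed (use U in auto)
  moreover have "U * adj U = 1\<^sub>m n"
    using mat_mult_left_right_inverse[OF adj_carrier[OF U] U calculation] .
  moreover have "col U 0 = u" using colU[OF n] nr0 ws0 u by simp
  ultimately show ?thesis using U unfolding unitary_def by blast
qed


section \<open>Spectral theorem for Hermitian matrices\<close>

lemma unitary_cancel: assumes "unitary n U" "X \<in> carrier_mat n k"
  shows "adj U * (U * X) = X" "U * (adj U * X) = X"
proof -
  have U: "U \<in> carrier_mat n n" "adj U * U = 1\<^sub>m n" "U * adj U = 1\<^sub>m n" using assms unfolding unitary_def by auto
  show "adj U * (U * X) = X" using U assms(2) by (subst assoc_mult_mat[symmetric, of _ n n _ n _ k]) auto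
  show "U * (adj U * X) = X" using U assms(2) by (subst assoc_mult_mat[symmetric, of _ n n _ n _ k]) auto
qed

lemma cnj_eq_real: "cnj z = z \<Longrightarrow> z = of_real (Re z)"
  by (simp add: complex_eq_iff)

lemma assoc5: assumes "P \<in> carrier_mat n n" "Q \<in> carrier_mat n n" "R \<in> carrier_mat n n"
  "S \<in> carrier_mat n n" "T \<in> carrier_mat n n"
  shows "P * Q * R * (S * T) = P * (Q * R * S) * T"
  using assms by (simp add: assoc_mult_mat[of _ n n _ n _ n])

theorem spectral_thm:
  "A \<in> carrier_mat m m \<Longrightarrow> adj A = A \<Longrightarrow>
   \<exists>W ls. unitary m W \<and> length ls = m \<and> A = W * diag_of (map complex_of_real ls) * adj W"
proof (induction m arbitrary: A)
  case 0
  show ?case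
    by (rule exI[of _ "1\<^sub>m 0"], rule exI[of _ "[]"]) (use 0 in \<open>auto simp: unitary_one diag_of_def intro!: eq_matI\<close>)
next
  case (Suc m)
  note A = Suc.prems(1) and hA = Suc.prems(2)
  from spectrum_non_empty[OF A] obtain lam where "lam \<in> spectrum A" by auto
  then obtain v where ev: "eigenvector A v lam" unfolding spectrum_def eigenvalue_def by auto
  then have v: "v \<in> carrier_vec (Suc m)" "v \<noteq> 0\<^sub>v (Suc m)" "A *\<^sub>v v = lam \<cdot>\<^sub>v v"
    using A unfolding eigenvector_def by auto
  define c where "c = 1 / complex_of_real (vnorm v)"
  define u where "u = c \<cdot>\<^sub>v v"
  have vp: "vnorm v > 0" using vnorm_pos v by auto
  have u: "u \<in> carrier_vec (Suc m)" using v u_def by auto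
  have "ip u u = cnj c * c * ip v v" unfolding u_def using v by (simp add: ip_smult_left ip_smult_right[of _ "Suc m"])
  also have "\<dots> = 1" using vp unfolding c_def ip_vnorm by (simp add: power2_eq_square)
  finally have u1: "ip u u = 1" .
  from unitary_completion[OF u u1] obtain U1 where U1u: "unitary (Suc m) U1" "col U1 0 = u" by auto
  have U1: "U1 \<in> carrier_mat (Suc m) (Suc m)" "adj U1 * U1 = 1\<^sub>m (Suc m)" "U1 * adj U1 = 1\<^sub>m (Suc m)"
    using U1u unfolding unitary_def by auto
  have Au: "A *\<^sub>v u = lam \<cdot>\<^sub>v u" unfolding u_def using v A by (simp add: mult_mat_vec smult_smult_assoc mult.commute)
  define B where "B = adj U1 * A * U1"
  have B: "B \<in> carrier_mat (Suc m) (Suc m)" using U1 A B_def by auto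
  have hB: "adj B = B"
  proof -
    have "adj B = adj U1 * adj (adj U1 * A)" unfolding B_def using U1 A by (subst adj_mult) auto
    also have "\<dots> = adj U1 * (A * U1)" using U1 A hA by (subst adj_mult) auto
    also have "\<dots> = B" unfolding B_def using U1 A by (subst assoc_mult_mat) auto
    finally show ?thesis .
  qed
  have colB: "col B 0 = lam \<cdot>\<^sub>v col (1\<^sub>m (Suc m)) 0"
  proof -
    have "col B 0 = (adj U1 * A) *\<^sub>v col U1 0" unfolding B_def using U1 A by (subst col_mult) auto
    also have "\<dots> = adj U1 *\<^sub>v (A *\<^sub>v u)" using U1 A u U1u by (subst assoc_mult_mat_vec) auto
    also have "\<dots> = lam \<cdot>\<^sub>v (adj U1 *\<^sub>v col U1 0)" using Au U1 u U1u mult_mat_vec[of "adj U1" "Suc m" "Suc m" u lam] by simp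
    also have "adj U1 *\<^sub>v col U1 0 = col (adj U1 * U1) 0" using U1 by (subst col_mult) auto
    finally show ?thesis using U1 by simp
  qed
  have B0: "B $$ (i,0) = (if i = 0 then lam else 0)" if "i < Suc m" for i
  proof -
    have "B $$ (i,0) = col B 0 $ i" using B that by auto
    then show ?thesis using colB that by simp
  qed
  have lreal: "lam = of_real (Re lam)"
  proof -
    have "adj B $$ (0,0) = cnj (B $$ (0,0))" using B by simp
    then have "cnj lam = lam" using hB B0[of 0] by simp
    then show ?thesis by (rule cnj_eq_real)
  qed
  have B0': "B $$ (0,j) = (if j = 0 then lam else 0)" if "j < Suc m" for j
  proof -
    have "B $$ (0,j) = adj B $$ (0,j)" using hB by simp
    also have "\<dots> = cnj (B $$ (j,0))" using B that by simp
    finally show ?thesis using B0[OF that] lreal by (metis complex_cnj_complex_of_real complex_cnj_zero)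
  qed
  define B3 where "B3 = mat m m (\<lambda>(i,j). B $$ (Suc i, Suc j))"
  have B3: "B3 \<in> carrier_mat m m" unfolding B3_def by simp
  have hB3: "adj B3 = B3"
  proof (rule eq_matI)
    fix i j assume "i < dim_row B3" "j < dim_col B3"
    then have ij: "i < m" "j < m" using B3 by auto
    have "adj B $$ (Suc i, Suc j) = cnj (B $$ (Suc j, Suc i))" using B ij by simp
    then show "adj B3 $$ (i,j) = B3 $$ (i,j)" using ij hB unfolding B3_def by simp
  qed (use B3 in auto)
  have Bext: "B = ext1 lam B3"
    by (rule eq_matI) (use B B0 B0' in \<open>auto simp: ext1_index B3_def\<close>)
  from Suc.IH[OF B3 hB3] obtain W3 ls3 where W3: "unitary m W3" "length ls3 = m"
    "B3 = W3 * diag_of (map complex_of_real ls3) * adj W3" by auto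
  define D3 where "D3 = diag_of (map complex_of_real ls3)"
  have D3: "D3 \<in> carrier_mat m m" unfolding D3_def using W3 diag_of_carrier[of "map complex_of_real ls3"] by simp
  have W3c: "W3 \<in> carrier_mat m m" using W3 unitary_def by auto
  define W where "W = U1 * ext1 1 W3"
  have W: "unitary (Suc m) W" unfolding W_def by (rule unitary_mult[OF U1u(1) unitary_ext1[OF W3(1)]])
  have diag: "diag_of (map complex_of_real (Re lam # ls3)) = ext1 lam D3"
    using lreal by (simp add: ext1_diag D3_def)
  have adjW: "adj W = ext1 1 (adj W3) * adj U1"
    unfolding W_def using U1 W3c by (simp add: adj_mult[of _ "Suc m" "Suc m" _ "Suc m"] ext1_adj)
  have inner: "ext1 1 W3 * ext1 lam D3 * ext1 1 (adj W3) = B"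
    using W3c D3 W3(3) Bext unfolding D3_def[symmetric]
    by (simp add: ext1_mult[of _ m m _ m])
  have "W * diag_of (map complex_of_real (Re lam # ls3)) * adj W
      = U1 * ext1 1 W3 * ext1 lam D3 * (ext1 1 (adj W3) * adj U1)"
    unfolding diag adjW unfolding W_def ..
  also have "\<dots> = U1 * (ext1 1 W3 * ext1 lam D3 * ext1 1 (adj W3)) * adj U1"
  proof -
    have c: "ext1 1 W3 \<in> carrier_mat (Suc m) (Suc m)" "ext1 lam D3 \<in> carrier_mat (Suc m) (Suc m)"
      "ext1 1 (adj W3) \<in> carrier_mat (Suc m) (Suc m)" using W3c D3 by auto
    show ?thesis using assoc5[OF U1(1) c adj_carrier[OF U1(1)]] .
  qed
  also have "\<dots> = U1 * (adj U1 * (A * U1)) * adj U1" unfolding inner B_def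
    using U1 A by (subst assoc_mult_mat) auto
  also have "\<dots> = A * U1 * adj U1" using unitary_cancel(2)[OF U1u(1), of "A * U1" "Suc m"] U1 A by simp
  also have "\<dots> = A" using U1 A by (subst assoc_mult_mat) auto
  finally show ?case using W W3(2) by (intro exI[of _ W] exI[of _ "Re lam # ls3"]) auto
qed


lemma ip_unitary: assumes "unitary m W" "x \<in> carrier_vec m" "y \<in> carrier_vec m"
  shows "ip (W *\<^sub>v x) (W *\<^sub>v y) = ip x y"
proof -
  have W: "W \<in> carrier_mat m m" "adj W * W = 1\<^sub>m m" using assms unfolding unitary_def by auto
  have "ip (W *\<^sub>v x) (W *\<^sub>v y) = ip (adj W *\<^sub>v (W *\<^sub>v x)) y"
    using ip_mult_adj[OF W(1) mult_mat_vec_carrier[OF W(1) assms(2)] assms(3)] .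
  also have "adj W *\<^sub>v (W *\<^sub>v x) = x" using W assms
    by (subst assoc_mult_mat_vec[symmetric, of _ m m _ m]) auto
  finally show ?thesis .
qed

lemma diag_of_dim[simp]: "dim_row (diag_of xs) = length xs" "dim_col (diag_of xs) = length xs"
  by (auto simp: diag_of_def)

definition vmul :: "real list \<Rightarrow> complex vec \<Rightarrow> complex vec" where
  "vmul ls c = vec (dim_vec c) (\<lambda>i. complex_of_real (ls ! i) * c $ i)"

lemma vmul_carrier[simp]: "c \<in> carrier_vec m \<Longrightarrow> vmul ls c \<in> carrier_vec m"
  by (simp add: vmul_def)

lemma diag_mult_vec: assumes "length ls = m" "c \<in> carrier_vec m"
  shows "diag_of (map complex_of_real ls) *\<^sub>v c = vmul ls c"
proof (rule eq_vecI)
  fix i assume "i < dim_vec (vmul ls c)"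
  then have i: "i < m" using assms by (simp add: vmul_def)
  have "(diag_of (map complex_of_real ls) *\<^sub>v c) $ i =
      (\<Sum>k\<in>{0..<m}. (if k = i then complex_of_real (ls ! k) * c $ k else 0))"
  proof -
    have "(diag_of (map complex_of_real ls) *\<^sub>v c) $ i =
      (\<Sum>k\<in>{0..<m}. diag_of (map complex_of_real ls) $$ (i,k) * c $ k)"
      using assms i by (auto simp: scalar_prod_def intro!: sum.cong)
    also have "\<dots> = (\<Sum>k\<in>{0..<m}. (if k = i then complex_of_real (ls ! k) * c $ k else 0))"
    proof (intro sum.cong refl)
      fix k assume "k \<in> {0..<m}"
      then show "diag_of (map complex_of_real ls) $$ (i,k) * c $ k = (if k = i then complex_of_real (ls ! k) * c $ k else 0)"
        using assms i by (auto simp: diag_of_def)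
    qed
    finally show ?thesis .
  qed
  also have "\<dots> = complex_of_real (ls ! i) * c $ i" using i by (simp add: sum.delta')
  finally show "(diag_of (map complex_of_real ls) *\<^sub>v c) $ i = vmul ls c $ i"
    using i assms by (simp add: vmul_def)
qed (use assms in \<open>auto simp: vmul_def diag_of_def\<close>)

lemma herm_decomp_apply: assumes W: "unitary m W" and ls: "length ls = m"
  and A: "A = W * diag_of (map complex_of_real ls) * adj W" and v: "v \<in> carrier_vec m"
  shows "A *\<^sub>v v = W *\<^sub>v vmul ls (adj W *\<^sub>v v)" "v = W *\<^sub>v (adj W *\<^sub>v v)"
proof -
  have Wc: "W \<in> carrier_mat m m" "W * adj W = 1\<^sub>m m" using W unitary_def by auto
  have D: "diag_of (map complex_of_real ls) \<in> carrier_mat m m" using diag_of_carrier[of "map complex_of_real ls"] ls by simp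
  have c: "adj W *\<^sub>v v \<in> carrier_vec m" using mult_mat_vec_carrier[OF adj_carrier[OF Wc(1)] v] .
  have "A *\<^sub>v v = W *\<^sub>v (diag_of (map complex_of_real ls) *\<^sub>v (adj W *\<^sub>v v))"
  proof -
    have a: "adj W *\<^sub>v v \<in> carrier_vec m" using c .
    have "A *\<^sub>v v = (W * diag_of (map complex_of_real ls)) *\<^sub>v (adj W *\<^sub>v v)"
      unfolding A using Wc D v by (intro assoc_mult_mat_vec) auto
    also have "\<dots> = W *\<^sub>v (diag_of (map complex_of_real ls) *\<^sub>v (adj W *\<^sub>v v))"
      using Wc D a by (intro assoc_mult_mat_vec) auto
    finally show ?thesis .
  qed
  then show "A *\<^sub>v v = W *\<^sub>v vmul ls (adj W *\<^sub>v v)" using diag_mult_vec[OF ls c] by simp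
  show "v = W *\<^sub>v (adj W *\<^sub>v v)" using Wc v
    by (subst assoc_mult_mat_vec[symmetric, of _ m m _ m]) auto
qed

lemma herm_quad: assumes W: "unitary m W" and ls: "length ls = m"
  and A: "A = W * diag_of (map complex_of_real ls) * adj W" and v: "v \<in> carrier_vec m"
  defines "c \<equiv> adj W *\<^sub>v v"
  shows "ip v (A *\<^sub>v v) = of_real (\<Sum>i<m. ls ! i * (cmod (c $ i))^2)"
    "ip v v = of_real (\<Sum>i<m. (cmod (c $ i))^2)"
    "ip (A *\<^sub>v v) (A *\<^sub>v v) = of_real (\<Sum>i<m. (ls ! i)^2 * (cmod (c $ i))^2)"
proof -
  have Wc: "W \<in> carrier_mat m m" using W unitary_def by auto
  have cc: "c \<in> carrier_vec m" unfolding c_def using mult_mat_vec_carrier[OF adj_carrier[OF Wc] v] .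
  note e = herm_decomp_apply[OF W ls A v, folded c_def]
  have "ip v (A *\<^sub>v v) = ip (W *\<^sub>v c) (W *\<^sub>v vmul ls c)" using e by simp
  also have "\<dots> = ip c (vmul ls c)" using ip_unitary[OF W] cc by simp
  also have "\<dots> = of_real (\<Sum>i<m. ls ! i * (cmod (c $ i))^2)"
    using cc unfolding ip_def vmul_def of_real_sum
    by (intro sum.cong) (auto simp: atLeast0LessThan complex_norm_square[symmetric] ac_simps)
  finally show "ip v (A *\<^sub>v v) = of_real (\<Sum>i<m. ls ! i * (cmod (c $ i))^2)" .
  have "ip v v = ip (W *\<^sub>v c) (W *\<^sub>v c)" using e by simp
  also have "\<dots> = ip c c" using ip_unitary[OF W] cc by simp
  also have "\<dots> = of_real (\<Sum>i<m. (cmod (c $ i))^2)"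
    using cc unfolding ip_def of_real_sum
    by (intro sum.cong) (auto simp: atLeast0LessThan complex_norm_square[symmetric] ac_simps)
  finally show "ip v v = of_real (\<Sum>i<m. (cmod (c $ i))^2)" .
  have "ip (A *\<^sub>v v) (A *\<^sub>v v) = ip (vmul ls c) (vmul ls c)" using e ip_unitary[OF W] cc by simp
  also have "\<dots> = of_real (\<Sum>i<m. (ls ! i)^2 * (cmod (c $ i))^2)"
    using cc unfolding ip_def vmul_def of_real_sum
    by (intro sum.cong) (auto simp: atLeast0LessThan complex_norm_square[symmetric] power2_eq_square ac_simps)
  finally show "ip (A *\<^sub>v v) (A *\<^sub>v v) = of_real (\<Sum>i<m. (ls ! i)^2 * (cmod (c $ i))^2)" .
qed



lemma msum_Nil[simp]: "msum d [] = 0\<^sub>m d d" by (simp add: msum_def)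
lemma msum_Cons[simp]: "msum d (x # xs) = x + msum d xs" by (simp add: msum_def)

lemma sq_mult_carrier[simp]: "A \<in> carrier_mat d d \<Longrightarrow> B \<in> carrier_mat d d \<Longrightarrow> A * B \<in> carrier_mat d d"
  by (metis mult_carrier_mat)

lemma sq_mult_vec_carrier[simp]: "A \<in> carrier_mat d d \<Longrightarrow> v \<in> carrier_vec d \<Longrightarrow> A *\<^sub>v v \<in> carrier_vec d"
  by (metis mult_mat_vec_carrier)

lemma prod3_carrier[simp]: "A \<in> carrier_mat d d \<Longrightarrow> B \<in> carrier_mat d d \<Longrightarrow> C \<in> carrier_mat d d \<Longrightarrow> A * B * C \<in> carrier_mat d d"
  by (metis adj_carrier mult_carrier_mat)+

lemma prod3_carrier_adj[simp]: "A \<in> carrier_mat d d \<Longrightarrow> B \<in> carrier_mat d d \<Longrightarrow> C \<in> carrier_mat d d \<Longrightarrow> adj A * B * C \<in> carrier_mat d d"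
  "A \<in> carrier_mat d d \<Longrightarrow> B \<in> carrier_mat d d \<Longrightarrow> C \<in> carrier_mat d d \<Longrightarrow> A * B * adj C \<in> carrier_mat d d"
  by (metis adj_carrier mult_carrier_mat)+

lemma msum_dim[simp]: "dim_row (msum d xs) = d" "dim_col (msum d xs) = d"
  by (induction xs) auto

lemma msum_carrier[simp]: "(\<forall>x\<in>set xs. x \<in> carrier_mat d d) \<Longrightarrow> msum d xs \<in> carrier_mat d d"
  by (induction xs) auto

lemma msum_index: "(\<forall>x\<in>set xs. x \<in> carrier_mat d d) \<Longrightarrow> i < d \<Longrightarrow> j < d \<Longrightarrow>
   msum d xs $$ (i,j) = (\<Sum>x\<leftarrow>xs. x $$ (i,j))"
  by (induction xs) auto

lemma msum_append: "(\<forall>x\<in>set xs. x \<in> carrier_mat d d) \<Longrightarrow> (\<forall>x\<in>set ys. x \<in> carrier_mat d d) \<Longrightarrow>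
   msum d (xs @ ys) = msum d xs + msum d ys"
  by (induction xs) (auto simp: assoc_add_mat)

lemma msum_concat: "(\<forall>xs\<in>set xss. \<forall>x\<in>set xs. x \<in> carrier_mat d d) \<Longrightarrow>
   msum d (concat xss) = msum d (map (msum d) xss)"
  by (induction xss) (auto simp: msum_append)

lemma msum_mult_left: "B \<in> carrier_mat d d \<Longrightarrow> (\<forall>x\<in>set xs. x \<in> carrier_mat d d) \<Longrightarrow>
   B * msum d xs = msum d (map (\<lambda>x. B * x) xs)"
  by (induction xs) (auto simp: mult_add_distrib_mat)

lemma msum_mult_right: "B \<in> carrier_mat d d \<Longrightarrow> (\<forall>x\<in>set xs. x \<in> carrier_mat d d) \<Longrightarrow>
   msum d xs * B = msum d (map (\<lambda>x. x * B) xs)"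
  by (induction xs) (auto simp: add_mult_distrib_mat)

lemma msum_adj: "(\<forall>x\<in>set xs. x \<in> carrier_mat d d) \<Longrightarrow> adj (msum d xs) = msum d (map adj xs)"
  by (induction xs) (auto simp: adj_add)

lemma msum_smult: "(\<forall>x\<in>set xs. x \<in> carrier_mat d d) \<Longrightarrow> c \<cdot>\<^sub>m msum d xs = msum d (map (\<lambda>x. c \<cdot>\<^sub>m x) xs)"
  by (induction xs) (auto simp: add_smult_distrib_left_mat)

lemma msum_cong: "(\<And>x. x \<in> set xs \<Longrightarrow> f x = g x) \<Longrightarrow> msum d (map f xs) = msum d (map g xs)"
  by (metis map_eq_conv)

lemma sum_list_swap: "(\<Sum>a\<leftarrow>A. \<Sum>b\<leftarrow>B. (g a b :: 'a :: comm_monoid_add)) = (\<Sum>b\<leftarrow>B. \<Sum>a\<leftarrow>A. g a b)"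
  by (induction A) (auto simp: sum_list_addf)

lemma msum_swap: assumes "\<And>a b. a \<in> set A \<Longrightarrow> b \<in> set B \<Longrightarrow> f a b \<in> carrier_mat d d"
  shows "msum d (map (\<lambda>a. msum d (map (f a) B)) A) = msum d (map (\<lambda>b. msum d (map (\<lambda>a. f a b) A)) B)"
proof (rule eq_matI)
  fix i j assume ij: "i < dim_row (msum d (map (\<lambda>b. msum d (map (\<lambda>a. f a b) A)) B))"
    "j < dim_col (msum d (map (\<lambda>b. msum d (map (\<lambda>a. f a b) A)) B))"
  then have ij: "i < d" "j < d" using assms by auto
  show "msum d (map (\<lambda>a. msum d (map (f a) B)) A) $$ (i,j) = msum d (map (\<lambda>b. msum d (map (\<lambda>a. f a b) A)) B) $$ (i,j)"
  proof -
    have "msum d (map (\<lambda>a. msum d (map (f a) B)) A) $$ (i,j) = (\<Sum>a\<leftarrow>A. \<Sum>b\<leftarrow>B. f a b $$ (i,j))"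
      using assms ij by (simp add: msum_index o_def cong: map_cong)
    also have "\<dots> = (\<Sum>b\<leftarrow>B. \<Sum>a\<leftarrow>A. f a b $$ (i,j))" by (rule sum_list_swap)
    also have "\<dots> = msum d (map (\<lambda>b. msum d (map (\<lambda>a. f a b) A)) B) $$ (i,j)"
      using assms ij by (simp add: msum_index o_def cong: map_cong)
    finally show ?thesis .
  qed
qed (use assms in auto)

lemma mtrace_add: "A \<in> carrier_mat d d \<Longrightarrow> B \<in> carrier_mat d d \<Longrightarrow> mtrace (A + B) = mtrace A + mtrace B"
  by (simp add: mtrace_def sum.distrib)

lemma mtrace_smult: "A \<in> carrier_mat d d \<Longrightarrow> mtrace (c \<cdot>\<^sub>m A) = c * mtrace A"
  by (auto simp: mtrace_def sum_distrib_left intro!: sum.cong)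

lemma mtrace_msum: "(\<forall>x\<in>set xs. x \<in> carrier_mat d d) \<Longrightarrow> mtrace (msum d xs) = (\<Sum>x\<leftarrow>xs. mtrace x)"
  by (induction xs) (auto simp: mtrace_add mtrace_def)

lemma mtrace_comm: assumes "A \<in> carrier_mat n m" "B \<in> carrier_mat m n"
  shows "mtrace (A * B) = mtrace (B * A)"
proof -
  have "mtrace (A * B) = (\<Sum>i<n. \<Sum>k<m. A $$ (i,k) * B $$ (k,i))"
    using assms by (simp add: mtrace_def scalar_prod_def atLeast0LessThan)
  also have "\<dots> = (\<Sum>k<m. \<Sum>i<n. B $$ (k,i) * A $$ (i,k))"
    by (subst sum.swap) (simp add: mult.commute)
  also have "\<dots> = mtrace (B * A)"
    using assms by (simp add: mtrace_def scalar_prod_def atLeast0LessThan)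
  finally show ?thesis .
qed

definition unitm :: "nat \<Rightarrow> nat \<Rightarrow> nat \<Rightarrow> complex mat" where
  "unitm d a b = mat d d (\<lambda>(i,j). if i = a \<and> j = b then 1 else 0)"

lemma unitm_carrier[simp]: "unitm d a b \<in> carrier_mat d d" by (simp add: unitm_def)

lemma mtrace_unitm: assumes "Y \<in> carrier_mat d d" "a < d" "b < d"
  shows "mtrace (Y * unitm d a b) = Y $$ (b,a)"
proof -
  have "mtrace (Y * unitm d a b) = (\<Sum>i\<in>{0..<d}. \<Sum>k\<in>{0..<d}. Y $$ (i,k) * (if k = a \<and> i = b then 1 else 0))"
    using assms by (simp add: mtrace_def scalar_prod_def unitm_def atLeast0LessThan)
  also have "\<dots> = (\<Sum>i\<in>{0..<d}. if i = b then Y $$ (i,a) else 0)"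
    using assms by (intro sum.cong refl) (auto simp: if_distrib sum.delta cong: if_cong)
  also have "\<dots> = Y $$ (b,a)" using assms by simp
  finally show ?thesis .
qed

lemma trace_ext: assumes "Y1 \<in> carrier_mat d d" "Y2 \<in> carrier_mat d d"
  and "\<And>X. X \<in> carrier_mat d d \<Longrightarrow> mtrace (Y1 * X) = mtrace (Y2 * X)"
  shows "Y1 = Y2"
proof (rule eq_matI)
  fix i j assume "i < dim_row Y2" "j < dim_col Y2"
  then have ij: "i < d" "j < d" using assms by auto
  show "Y1 $$ (i,j) = Y2 $$ (i,j)"
    using assms(3)[OF unitm_carrier[of d j i]] mtrace_unitm[OF assms(1) ij(2,1)] mtrace_unitm[OF assms(2) ij(2,1)]
    by simp
qed (use assms in auto)


section \<open>Kraus representations\<close>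

definition kdual :: "nat \<Rightarrow> complex mat list \<Rightarrow> complex mat \<Rightarrow> complex mat" where
  "kdual d Ks B = msum d (map (\<lambda>K. adj K * B * K) Ks)"

lemma kraus_repD: assumes "kraus_rep d Ks T"
  shows "\<And>K. K \<in> set Ks \<Longrightarrow> K \<in> carrier_mat d d" "msum d (map (\<lambda>K. adj K * K) Ks) = 1\<^sub>m d"
    "\<And>X. X \<in> carrier_mat d d \<Longrightarrow> T X = msum d (map (\<lambda>K. K * X * adj K) Ks)"
  using assms unfolding kraus_rep_def by auto

lemma kraus_carrier: assumes "kraus_rep d Ks T" "X \<in> carrier_mat d d" shows "T X \<in> carrier_mat d d"
  using kraus_repD[OF assms(1)] assms(2) by (auto intro!: msum_carrier)

lemma kdual_carrier: assumes "\<And>K. K \<in> set Ks \<Longrightarrow> K \<in> carrier_mat d d" "B \<in> carrier_mat d d"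
  shows "kdual d Ks B \<in> carrier_mat d d"
  using assms unfolding kdual_def by (auto intro!: msum_carrier)

lemma trace_cyc3: assumes "B \<in> carrier_mat d d" "K \<in> carrier_mat d d" "X \<in> carrier_mat d d"
  shows "mtrace (B * (K * X * adj K)) = mtrace (adj K * B * K * X)"
proof -
  have "B * (K * X * adj K) = (B * K * X) * adj K" using assms by (simp add: assoc_mult_mat[of _ d d _ d _ d])
  then have "mtrace (B * (K * X * adj K)) = mtrace (adj K * (B * K * X))"
    using mtrace_comm[of "B * K * X" d d "adj K"] assms by simp
  also have "adj K * (B * K * X) = adj K * B * K * X" using assms by (simp add: assoc_mult_mat[of _ d d _ d _ d])
  finally show ?thesis .
qed

lemma kraus_duality: assumes T: "kraus_rep d Ks T" and X: "X \<in> carrier_mat d d" and B: "B \<in> carrier_mat d d"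
  shows "mtrace (B * T X) = mtrace (kdual d Ks B * X)"
proof -
  note K = kraus_repD[OF T]
  have "B * T X = msum d (map (\<lambda>K. B * (K * X * adj K)) Ks)"
    unfolding K(3)[OF X] using B K X by (subst msum_mult_left) (auto simp: o_def)
  then have "mtrace (B * T X) = (\<Sum>K\<leftarrow>Ks. mtrace (B * (K * X * adj K)))"
    using K X B by (simp add: mtrace_msum o_def)
  also have "\<dots> = (\<Sum>K\<leftarrow>Ks. mtrace (adj K * B * K * X))"
    using K X B trace_cyc3 by (intro arg_cong[where f=sum_list] map_cong) auto
  also have "\<dots> = mtrace (kdual d Ks B * X)"
  proof -
    have "kdual d Ks B * X = msum d (map (\<lambda>K. adj K * B * K * X) Ks)"
      unfolding kdual_def using B K X by (subst msum_mult_right) (auto simp: o_def)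
    then show ?thesis using K X B by (simp add: mtrace_msum o_def)
  qed
  finally show ?thesis .
qed

lemma kdual_one: assumes "kraus_rep d Ks T" shows "kdual d Ks (1\<^sub>m d) = 1\<^sub>m d"
proof -
  note K = kraus_repD[OF assms]
  have "kdual d Ks (1\<^sub>m d) = msum d (map (\<lambda>K. adj K * K) Ks)"
    unfolding kdual_def using K by (intro msum_cong) (simp add: right_mult_one_mat[of _ d d])
  then show ?thesis using K by simp
qed

lemma kraus_adj: assumes T: "kraus_rep d Ks T" and X: "X \<in> carrier_mat d d"
  shows "T (adj X) = adj (T X)"
proof -
  note K = kraus_repD[OF T]
  have "adj (T X) = msum d (map (\<lambda>K. adj (K * X * adj K)) Ks)"
    unfolding K(3)[OF X] using K X by (subst msum_adj) (auto simp: o_def)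
  also have "\<dots> = msum d (map (\<lambda>K. K * adj X * adj K) Ks)"
    using K X by (intro msum_cong) (simp add: adj_mult[of _ d d _ d] assoc_mult_mat[of _ d d _ d _ d])
  also have "\<dots> = T (adj X)" using K X by simp
  finally show ?thesis by simp
qed

lemma kdual_adj: assumes K: "\<And>K. K \<in> set Ks \<Longrightarrow> K \<in> carrier_mat d d" and X: "X \<in> carrier_mat d d"
  shows "kdual d Ks (adj X) = adj (kdual d Ks X)"
proof -
  have "adj (kdual d Ks X) = msum d (map (\<lambda>K. adj (adj K * X * K)) Ks)"
    unfolding kdual_def using K X by (subst msum_adj) (auto simp: o_def)
  also have "\<dots> = msum d (map (\<lambda>K. adj K * adj X * K) Ks)"
    using K X by (intro msum_cong) (simp add: adj_mult[of _ d d _ d] assoc_mult_mat[of _ d d _ d _ d])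
  finally show ?thesis by (simp add: kdual_def)
qed

lemma ip_add_right: "v \<in> carrier_vec n \<Longrightarrow> x \<in> carrier_vec n \<Longrightarrow> y \<in> carrier_vec n \<Longrightarrow> ip v (x + y) = ip v x + ip v y"
  by (simp add: ip_def sum.distrib distrib_left)

lemma kdual_quad: assumes K: "\<And>K. K \<in> set Ks \<Longrightarrow> K \<in> carrier_mat d d" and B: "B \<in> carrier_mat d d"
  and v: "v \<in> carrier_vec d"
  shows "ip v (kdual d Ks B *\<^sub>v v) = (\<Sum>K\<leftarrow>Ks. ip (K *\<^sub>v v) (B *\<^sub>v (K *\<^sub>v v)))"
  using K
proof (induction Ks)
  case Nil
  then show ?case using v by (simp add: kdual_def ip_def)
next
  case (Cons K Ks)
  have Kc: "K \<in> carrier_mat d d" using Cons by auto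
  have IH: "ip v (kdual d Ks B *\<^sub>v v) = (\<Sum>K\<leftarrow>Ks. ip (K *\<^sub>v v) (B *\<^sub>v (K *\<^sub>v v)))" using Cons by auto
  have c: "kdual d Ks B \<in> carrier_mat d d" using kdual_carrier[of Ks d B] Cons B by auto
  have "kdual d (K # Ks) B = adj K * B * K + kdual d Ks B" by (simp add: kdual_def)
  then have "kdual d (K # Ks) B *\<^sub>v v = (adj K * B * K) *\<^sub>v v + kdual d Ks B *\<^sub>v v"
    using Kc B c v by (simp add: add_mult_distrib_mat_vec[of _ d d])
  then have "ip v (kdual d (K # Ks) B *\<^sub>v v) = ip v ((adj K * B * K) *\<^sub>v v) + ip v (kdual d Ks B *\<^sub>v v)"
    using Kc B c v by (simp add: ip_add_right[of _ d])
  also have "(adj K * B * K) *\<^sub>v v = adj K *\<^sub>v (B *\<^sub>v (K *\<^sub>v v))"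
    using Kc B v by (simp add: assoc_mult_mat_vec[of _ d d _ d])
  also have "ip v (adj K *\<^sub>v (B *\<^sub>v (K *\<^sub>v v))) = ip (K *\<^sub>v v) (B *\<^sub>v (K *\<^sub>v v))"
    using ip_mult_adj[of "adj K" d d v "B *\<^sub>v (K *\<^sub>v v)"] Kc B v by simp
  finally show ?case using IH by simp
qed

lemma channel_dual_kraus: assumes "quantum_channel d T"
  shows "\<exists>Ks. kraus_rep d Ks T \<and> (\<forall>B. channel_dual d T B = kdual d Ks B)"
proof -
  have "kraus_rep d (SOME Ks. kraus_rep d Ks T) T" using assms unfolding quantum_channel_def by (rule someI_ex)
  then show ?thesis unfolding channel_dual_def kdual_def Let_def by blast
qed

lemma qc_comp: assumes T1: "kraus_rep d Ks1 T1" and T2: "kraus_rep d Ks2 T2"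
  shows "kraus_rep d (concat (map (\<lambda>K1. map (\<lambda>K2. K1 * K2) Ks2) Ks1)) (T1 \<circ> T2)"
proof -
  note K1 = kraus_repD[OF T1] and K2 = kraus_repD[OF T2]
  define Ks where "Ks = concat (map (\<lambda>K1. map (\<lambda>K2. K1 * K2) Ks2) Ks1)"
  have Ksc: "\<forall>K\<in>set Ks. K \<in> carrier_mat d d" unfolding Ks_def using K1 K2 by auto
  have "msum d (map (\<lambda>K. adj K * K) Ks) = msum d (map (\<lambda>a. msum d (map (\<lambda>b. adj b * (adj a * a) * b) Ks2)) Ks1)"
    unfolding Ks_def map_concat using K1 K2
    by (subst msum_concat) (auto simp: o_def adj_mult[of _ d d _ d] assoc_mult_mat[of _ d d _ d _ d] intro!: msum_cong)
  also have "\<dots> = msum d (map (\<lambda>b. msum d (map (\<lambda>a. adj b * (adj a * a) * b) Ks1)) Ks2)"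
    using K1 K2 by (intro msum_swap) auto
  also have "\<dots> = msum d (map (\<lambda>b. adj b * b) Ks2)"
  proof (intro msum_cong)
    fix b assume b: "b \<in> set Ks2"
    have "msum d (map (\<lambda>a. adj b * (adj a * a) * b) Ks1) = msum d (map (\<lambda>a. adj b * (adj a * a)) Ks1) * b"
      using K1 K2 b by (subst msum_mult_right) (auto simp: o_def)
    also have "msum d (map (\<lambda>a. adj b * (adj a * a)) Ks1) = adj b * msum d (map (\<lambda>a. adj a * a) Ks1)"
      using K1 K2 b by (subst msum_mult_left) (auto simp: o_def)
    finally show "msum d (map (\<lambda>a. adj b * (adj a * a) * b) Ks1) = adj b * b" using K1 K2 b
      by (simp add: right_mult_one_mat[of _ d d])
  qed
  also have "\<dots> = 1\<^sub>m d" using K2 by simp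
  finally have c: "msum d (map (\<lambda>K. adj K * K) Ks) = 1\<^sub>m d" .
  have t: "(T1 \<circ> T2) X = msum d (map (\<lambda>K. K * X * adj K) Ks)" if X: "X \<in> carrier_mat d d" for X
  proof -
    have T2X: "T2 X \<in> carrier_mat d d" using kraus_carrier[OF T2 X] .
    have "(T1 \<circ> T2) X = msum d (map (\<lambda>a. a * msum d (map (\<lambda>b. b * X * adj b) Ks2) * adj a) Ks1)"
      using K1(3)[OF T2X] K2(3)[OF X] by simp
    also have "\<dots> = msum d (map (\<lambda>a. msum d (map (\<lambda>b. a * b * X * adj (a * b)) Ks2)) Ks1)"
    proof (intro msum_cong)
      fix a assume a: "a \<in> set Ks1"
      have "a * msum d (map (\<lambda>b. b * X * adj b) Ks2) * adj a = msum d (map (\<lambda>b. a * (b * X * adj b)) Ks2) * adj a"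
        using K1 K2 a X by (subst msum_mult_left) (auto simp: o_def)
      also have "\<dots> = msum d (map (\<lambda>b. a * (b * X * adj b) * adj a) Ks2)"
        using K1 K2 a X by (subst msum_mult_right) (auto simp: o_def)
      also have "\<dots> = msum d (map (\<lambda>b. a * b * X * adj (a * b)) Ks2)"
        using K1 K2 a X by (intro msum_cong) (simp add: adj_mult[of _ d d _ d] assoc_mult_mat[of _ d d _ d _ d])
      finally show "a * msum d (map (\<lambda>b. b * X * adj b) Ks2) * adj a = msum d (map (\<lambda>b. a * b * X * adj (a * b)) Ks2)" .
    qed
    also have "\<dots> = msum d (map (\<lambda>K. K * X * adj K) Ks)"
      unfolding Ks_def map_concat using K1 K2 X by (subst msum_concat) (auto simp: o_def)
    finally show ?thesis .
  qed
  show ?thesis unfolding kraus_rep_def Ks_def[symmetric] using Ksc c t by blast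
qed

lemma channel_dual_comp: assumes T1: "quantum_channel d T1" and T2: "quantum_channel d T2"
  and B: "B \<in> carrier_mat d d"
  shows "channel_dual d (T1 \<circ> T2) B = channel_dual d T2 (channel_dual d T1 B)"
proof -
  obtain Ks1 where K1: "kraus_rep d Ks1 T1" "\<forall>B. channel_dual d T1 B = kdual d Ks1 B" using channel_dual_kraus[OF T1] by auto
  obtain Ks2 where K2: "kraus_rep d Ks2 T2" "\<forall>B. channel_dual d T2 B = kdual d Ks2 B" using channel_dual_kraus[OF T2] by auto
  have Q: "quantum_channel d (T1 \<circ> T2)" using qc_comp[OF K1(1) K2(1)] unfolding quantum_channel_def by blast
  obtain Ks where K: "kraus_rep d Ks (T1 \<circ> T2)" "\<forall>B. channel_dual d (T1 \<circ> T2) B = kdual d Ks B" using channel_dual_kraus[OF Q] by auto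
  note c1 = kraus_repD(1)[OF K1(1)] and c2 = kraus_repD(1)[OF K2(1)] and c = kraus_repD(1)[OF K(1)]
  have D1: "kdual d Ks1 B \<in> carrier_mat d d" using kdual_carrier[OF c1 B] .
  have "kdual d Ks B = kdual d Ks2 (kdual d Ks1 B)"
  proof (rule trace_ext)
    show "kdual d Ks B \<in> carrier_mat d d" using kdual_carrier[OF c B] .
    show "kdual d Ks2 (kdual d Ks1 B) \<in> carrier_mat d d" using kdual_carrier[OF c2 D1] .
    fix X :: "complex mat" assume X: "X \<in> carrier_mat d d"
    have "mtrace (kdual d Ks B * X) = mtrace (B * (T1 \<circ> T2) X)" using kraus_duality[OF K(1) X B] by simp
    also have "\<dots> = mtrace (kdual d Ks1 B * T2 X)" using kraus_duality[OF K1(1) kraus_carrier[OF K2(1) X] B] by simp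
    also have "\<dots> = mtrace (kdual d Ks2 (kdual d Ks1 B) * X)" using kraus_duality[OF K2(1) X D1] .
    finally show "mtrace (kdual d Ks B * X) = mtrace (kdual d Ks2 (kdual d Ks1 B) * X)" .
  qed
  then show ?thesis using K(2) K1(2) K2(2) by simp
qed


section \<open>Part A: detailed balance of the composition\<close>

lemma channel_dual_carrier: assumes "quantum_channel d T" "B \<in> carrier_mat d d"
  shows "channel_dual d T B \<in> carrier_mat d d"
proof -
  obtain Ks where K: "kraus_rep d Ks T" "\<forall>B. channel_dual d T B = kdual d Ks B" using channel_dual_kraus[OF assms(1)] by auto
  show ?thesis using K kdual_carrier[OF kraus_repD(1)[OF K(1)] assms(2)] by simp
qed

lemma qc_comp': "quantum_channel d T1 \<Longrightarrow> quantum_channel d T2 \<Longrightarrow> quantum_channel d (T1 \<circ> T2)"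
  unfolding quantum_channel_def using qc_comp by blast

lemma dual_MNM: assumes M: "quantum_channel d M" and N: "quantum_channel d N" and B: "B \<in> carrier_mat d d"
  shows "channel_dual d (M \<circ> N \<circ> M) B = channel_dual d M (channel_dual d N (channel_dual d M B))"
proof -
  have MN: "quantum_channel d (M \<circ> N)" using qc_comp'[OF M N] .
  have "channel_dual d (M \<circ> N \<circ> M) B = channel_dual d M (channel_dual d (M \<circ> N) B)"
    using channel_dual_comp[OF MN M B] .
  also have "channel_dual d (M \<circ> N) B = channel_dual d N (channel_dual d M B)"
    using channel_dual_comp[OF M N B] .
  finally show ?thesis .
qed

theorem db_MNM: assumes M: "quantum_channel d M" "detailed_balance d \<rho> s M"
  and N: "quantum_channel d N" "detailed_balance d \<rho> s N"
  shows "detailed_balance d \<rho> s (M \<circ> N \<circ> M)"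
  unfolding detailed_balance_def
proof (intro ballI)
  fix A B :: "complex mat" assume A: "A \<in> carrier_mat d d" and B: "B \<in> carrier_mat d d"
  let ?M = "channel_dual d M" and ?N = "channel_dual d N"
  have c: "\<And>X. X \<in> carrier_mat d d \<Longrightarrow> ?M X \<in> carrier_mat d d" "\<And>X. X \<in> carrier_mat d d \<Longrightarrow> ?N X \<in> carrier_mat d d"
    using channel_dual_carrier M(1) N(1) by auto
  have dbM: "\<And>X Y. X \<in> carrier_mat d d \<Longrightarrow> Y \<in> carrier_mat d d \<Longrightarrow> s_inner \<rho> s X (?M Y) = s_inner \<rho> s (?M X) Y"
    using M(2) unfolding detailed_balance_def by auto
  have dbN: "\<And>X Y. X \<in> carrier_mat d d \<Longrightarrow> Y \<in> carrier_mat d d \<Longrightarrow> s_inner \<rho> s X (?N Y) = s_inner \<rho> s (?N X) Y"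
    using N(2) unfolding detailed_balance_def by auto
  have "s_inner \<rho> s A (channel_dual d (M \<circ> N \<circ> M) B) = s_inner \<rho> s A (?M (?N (?M B)))"
    using dual_MNM[OF M(1) N(1) B] by simp
  also have "\<dots> = s_inner \<rho> s (?M A) (?N (?M B))" using dbM A c B by simp
  also have "\<dots> = s_inner \<rho> s (?N (?M A)) (?M B)" using dbN A c B by simp
  also have "\<dots> = s_inner \<rho> s (?M (?N (?M A))) B" using dbM A c B by simp
  also have "\<dots> = s_inner \<rho> s (channel_dual d (M \<circ> N \<circ> M) A) B"
    using dual_MNM[OF M(1) N(1) A] by simp
  finally show "s_inner \<rho> s A (channel_dual d (M \<circ> N \<circ> M) B) = s_inner \<rho> s (channel_dual d (M \<circ> N \<circ> M) A) B" .
qed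

lemma mat_fun_spec: assumes A: "A \<in> carrier_mat d d" and hA: "adj A = A"
  shows "\<exists>U ls. unitary d U \<and> length ls = d \<and> A = U * diag_of (map complex_of_real ls) * adj U \<and>
     (\<forall>f. mat_fun f A = U * diag_of (map (\<lambda>x. complex_of_real (f x)) ls) * adj U)"
proof -
  define Pr where "Pr = (\<lambda>(U, ls). unitary d U \<and> length ls = d \<and> A = U * diag_of (map complex_of_real ls) * adj U)"
  have ex: "\<exists>p. Pr p" using spectral_thm[OF A hA] unfolding Pr_def by auto
  obtain U ls where p: "(SOME p. Pr p) = (U, ls)" by (cases "SOME p. Pr p") auto
  have "Pr (U, ls)" using someI_ex[OF ex] p by simp
  moreover have "mat_fun f A = U * diag_of (map (\<lambda>x. complex_of_real (f x)) ls) * adj U" for f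
    unfolding mat_fun_def Let_def using A p unfolding Pr_def by simp
  ultimately show ?thesis unfolding Pr_def by auto
qed

lemma diag_of_mult: "diag_of (map f xs) * diag_of (map g xs) = diag_of (map (\<lambda>x. f x * g x) xs)"
proof (rule eq_matI)
  fix i j assume ij: "i < dim_row (diag_of (map (\<lambda>x. f x * g x) xs))" "j < dim_col (diag_of (map (\<lambda>x. f x * g x) xs))"
  then have ij: "i < length xs" "j < length xs" by (auto simp: diag_of_def)
  have "(diag_of (map f xs) * diag_of (map g xs)) $$ (i,j) =
     (\<Sum>k\<in>{0..<length xs}. diag_of (map f xs) $$ (i,k) * diag_of (map g xs) $$ (k,j))"
    using ij by (auto simp: scalar_prod_def intro!: sum.cong)
  also have "\<dots> = (\<Sum>k\<in>{0..<length xs}. if k = i then (if i = j then f (xs ! i) * g (xs ! i) else 0) else 0)"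
    using ij by (intro sum.cong refl) (auto simp: diag_of_def)
  also have "\<dots> = diag_of (map (\<lambda>x. f x * g x) xs) $$ (i,j)" using ij by (simp add: diag_of_def)
  finally show "(diag_of (map f xs) * diag_of (map g xs)) $$ (i,j) = diag_of (map (\<lambda>x. f x * g x) xs) $$ (i,j)" .
qed (auto simp: diag_of_def)

lemma diag_of_adj: "adj (diag_of (map f xs)) = diag_of (map (\<lambda>x. cnj (f x)) xs)"
  by (rule eq_matI) (auto simp: diag_of_def)

lemma diag_of_one: "diag_of (map (\<lambda>x. 1) xs) = 1\<^sub>m (length xs)"
  by (rule eq_matI) (auto simp: diag_of_def)

lemma diag_of_smult: "c \<cdot>\<^sub>m diag_of (map f xs) = diag_of (map (\<lambda>x. c * f x) xs)"
  by (rule eq_matI) (auto simp: diag_of_def)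

lemma diag_of_cong: "(\<And>x. x \<in> set xs \<Longrightarrow> f x = g x) \<Longrightarrow> diag_of (map f xs) = diag_of (map g xs)"
  by (metis map_cong)

lemma mtrace_diag_of: "mtrace (diag_of xs) = (\<Sum>i<length xs. xs ! i)"
  by (simp add: mtrace_def diag_of_def)

lemma mtrace_unitary_conj: assumes "unitary d U" "D \<in> carrier_mat d d"
  shows "mtrace (U * D * adj U) = mtrace D"
proof -
  have U: "U \<in> carrier_mat d d" "adj U * U = 1\<^sub>m d" using assms unitary_def by auto
  have "mtrace (U * D * adj U) = mtrace (adj U * (U * D))"
    using mtrace_comm[of "U * D" d d "adj U"] U assms by simp
  also have "adj U * (U * D) = D" using unitary_cancel(1)[OF assms(1) assms(2)] .
  finally show ?thesis .
qed


lemma herm_quad_bounds: assumes W: "unitary m W" and ls: "length ls = m"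
  and A: "A = W * diag_of (map complex_of_real ls) * adj W" and v: "v \<in> carrier_vec m"
  shows "\<exists>q nv. ip v (A *\<^sub>v v) = of_real q \<and> ip v v = of_real nv \<and>
     (\<forall>lo. (\<forall>x\<in>set ls. lo \<le> x) \<longrightarrow> lo * nv \<le> q) \<and>
     (\<forall>hi. (\<forall>x\<in>set ls. x \<le> hi) \<longrightarrow> q \<le> hi * nv)"
proof -
  define c where "c = adj W *\<^sub>v v"
  note h = herm_quad[OF W ls A v, folded c_def]
  define q where "q = (\<Sum>i<m. ls ! i * (cmod (c $ i))^2)"
  define nv where "nv = (\<Sum>i<m. (cmod (c $ i))^2)"
  have lo: "lo * nv \<le> q" if "\<forall>x\<in>set ls. lo \<le> x" for lo
    unfolding q_def nv_def sum_distrib_left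
    by (intro sum_mono mult_right_mono) (use that ls in auto)
  have hi: "q \<le> hi * nv" if "\<forall>x\<in>set ls. x \<le> hi" for hi
    unfolding q_def nv_def sum_distrib_left
    by (intro sum_mono mult_right_mono) (use that ls in auto)
  show ?thesis using h lo hi unfolding q_def nv_def by blast
qed

lemma herm_adj: assumes "unitary d U" "length ls = d"
  shows "adj (U * diag_of (map complex_of_real ls) * adj U) = U * diag_of (map complex_of_real ls) * adj U"
proof -
  have U: "U \<in> carrier_mat d d" using assms unitary_def by auto
  have D: "diag_of (map complex_of_real ls) \<in> carrier_mat d d" using assms diag_of_carrier[of "map complex_of_real ls"] by simp
  have "adj (U * diag_of (map complex_of_real ls) * adj U) = U * (adj (diag_of (map complex_of_real ls)) * adj U)"
    using U D by (simp add: adj_mult[of _ d d _ d])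
  also have "adj (diag_of (map complex_of_real ls)) = diag_of (map complex_of_real ls)"
    by (simp add: diag_of_adj[of complex_of_real ls, simplified] o_def)
  finally show ?thesis using U D by (simp add: assoc_mult_mat[of _ d d _ d _ d])
qed

lemma gibbs_setup: assumes H: "H \<in> carrier_mat d d" "hermitian H" and d: "d > 0"
  shows "\<exists>V \<mu>. unitary d V \<and> length \<mu> = d \<and> (\<forall>x\<in>set \<mu>. x > 0) \<and>
     gibbs \<beta> H = V * diag_of (map complex_of_real \<mu>) * adj V \<and>
     (\<forall>t. mat_rpow (gibbs \<beta> H) t = V * diag_of (map (\<lambda>x. complex_of_real (x powr t)) \<mu>) * adj V)"
proof -
  have hH: "adj H = H" using H unfolding hermitian_def by auto
  obtain U ls where U: "unitary d U" "length ls = d" "H = U * diag_of (map complex_of_real ls) * adj U"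
    "\<forall>f. mat_fun f H = U * diag_of (map (\<lambda>x. complex_of_real (f x)) ls) * adj U"
    using mat_fun_spec[OF H(1) hH] by blast
  have Uc: "U \<in> carrier_mat d d" using U unitary_def by auto
  define e where "e = map (\<lambda>x. exp (- \<beta> * x)) ls"
  have le: "length e = d" using U e_def by simp
  define E where "E = mat_fun (\<lambda>x. exp (- \<beta> * x)) H"
  have E: "E = U * diag_of (map complex_of_real e) * adj U" unfolding E_def e_def using U(4) by (simp add: o_def)
  define Z where "Z = (\<Sum>i<d. e ! i)"
  have Zpos: "Z > 0" unfolding Z_def using d le e_def by (intro sum_pos) auto
  have trE: "mtrace E = of_real Z"
    unfolding E using mtrace_unitary_conj[OF U(1), of "diag_of (map complex_of_real e)"] le
      diag_of_carrier[of "map complex_of_real e"]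
    by (simp add: mtrace_diag_of Z_def)
  define r where "r = map (\<lambda>x. x / Z) e"
  have lr: "length r = d" using le r_def by simp
  have rpos: "\<forall>x\<in>set r. x > 0" unfolding r_def e_def using Zpos by auto
  have rho: "gibbs \<beta> H = U * diag_of (map complex_of_real r) * adj U"
  proof -
    have "gibbs \<beta> H = (1 / of_real Z) \<cdot>\<^sub>m E" unfolding gibbs_def E_def[symmetric] trE ..
    also have "\<dots> = U * ((1 / of_real Z) \<cdot>\<^sub>m diag_of (map complex_of_real e)) * adj U"
    proof -
      have Dc: "diag_of (map complex_of_real e) \<in> carrier_mat d d" using le diag_of_carrier[of "map complex_of_real e"] by simp
      have "(1 / of_real Z) \<cdot>\<^sub>m E = ((1 / of_real Z) \<cdot>\<^sub>m (U * diag_of (map complex_of_real e))) * adj U"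
        unfolding E using Uc Dc by (subst mult_smult_assoc_mat[of _ d d]) auto
      also have "(1 / of_real Z) \<cdot>\<^sub>m (U * diag_of (map complex_of_real e)) = U * ((1 / of_real Z) \<cdot>\<^sub>m diag_of (map complex_of_real e))"
        using Uc Dc by (subst mult_smult_distrib[of _ d d]) auto
      finally show ?thesis .
    qed
    also have "(1 / of_real Z) \<cdot>\<^sub>m diag_of (map complex_of_real e) = diag_of (map complex_of_real r)"
      unfolding r_def diag_of_smult by (simp add: o_def)
    finally show ?thesis .
  qed
  define \<rho> where "\<rho> = gibbs \<beta> H"
  have rhoc: "\<rho> \<in> carrier_mat d d" unfolding \<rho>_def rho using Uc lr diag_of_carrier[of "map complex_of_real r"] by simp
  have hrho: "adj \<rho> = \<rho>" unfolding \<rho>_def rho using herm_adj[OF U(1) lr] .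
  obtain V \<mu> where V: "unitary d V" "length \<mu> = d" "\<rho> = V * diag_of (map complex_of_real \<mu>) * adj V"
    "\<forall>f. mat_fun f \<rho> = V * diag_of (map (\<lambda>x. complex_of_real (f x)) \<mu>) * adj V"
    using mat_fun_spec[OF rhoc hrho] by blast
  have Vc: "V \<in> carrier_mat d d" "adj V * V = 1\<^sub>m d" using V unitary_def by auto
  have mupos: "\<mu> ! i > 0" if i: "i < d" for i
  proof -
    define v where "v = col V i"
    have v: "v \<in> carrier_vec d" unfolding v_def using Vc i by auto
    have c: "adj V *\<^sub>v v = unit_vec d i"
    proof -
      have "adj V *\<^sub>v v = col (adj V * V) i" unfolding v_def using Vc i by (subst col_mult) auto
      then show ?thesis using Vc i by simp
    qed
    have cx: "(cmod ((adj V *\<^sub>v v) $ x))^2 = (if x = i then 1 else 0)" if "x < d" for x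
      using c that by (simp add: unit_vec_def)
    have s1: "(\<Sum>x<d. \<mu> ! x * (cmod ((adj V *\<^sub>v v) $ x))^2) = \<mu> ! i"
    proof -
      have "(\<Sum>x<d. \<mu> ! x * (cmod ((adj V *\<^sub>v v) $ x))^2) = (\<Sum>x<d. if x = i then \<mu> ! i else 0)"
        using cx by (intro sum.cong) auto
      then show ?thesis using i by simp
    qed
    have s2: "(\<Sum>x<d. (cmod ((adj V *\<^sub>v v) $ x))^2) = 1"
    proof -
      have "(\<Sum>x<d. (cmod ((adj V *\<^sub>v v) $ x))^2) = (\<Sum>x<d. if x = i then 1 else 0)"
        using cx by (intro sum.cong) auto
      then show ?thesis using i by simp
    qed
    have q1: "ip v (\<rho> *\<^sub>v v) = of_real (\<mu> ! i)"
      using herm_quad(1)[OF V(1) V(2) V(3) v] s1 by simp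
    have n1: "ip v v = 1"
      using herm_quad(2)[OF V(1) V(2) V(3) v] s2 by simp
    obtain q nv where b: "ip v (\<rho> *\<^sub>v v) = of_real q" "ip v v = of_real nv"
      "\<forall>lo. (\<forall>x\<in>set r. lo \<le> x) \<longrightarrow> lo * nv \<le> q"
      using herm_quad_bounds[OF U(1) lr rho[folded \<rho>_def] v] by blast
    have nv1: "nv = 1" using b(2) n1 by simp
    have q: "q = \<mu> ! i" using b(1) q1 by simp
    define lo where "lo = Min (set r)"
    have "set r \<noteq> {}" using lr d by auto
    then have lo: "lo > 0" "\<forall>x\<in>set r. lo \<le> x" unfolding lo_def using rpos by auto
    then show ?thesis using b(3) nv1 q by force
  qed
  have "\<forall>x\<in>set \<mu>. x > 0" using mupos V(2) by (auto simp: in_set_conv_nth)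
  moreover have "mat_rpow \<rho> t = V * diag_of (map (\<lambda>x. complex_of_real (x powr t)) \<mu>) * adj V" for t
    unfolding mat_rpow_def using V(4) by simp
  ultimately show ?thesis using V unfolding \<rho>_def by blast
qed


section \<open>Vectorisation of matrices\<close>

definition vecm :: "nat \<Rightarrow> complex mat \<Rightarrow> complex vec" where
  "vecm d X = vec (d * d) (\<lambda>p. X $$ (p div d, p mod d))"

definition unvecm :: "nat \<Rightarrow> complex vec \<Rightarrow> complex mat" where
  "unvecm d v = mat d d (\<lambda>(i,j). v $ (i * d + j))"

lemma vecm_carrier[simp]: "vecm d X \<in> carrier_vec (d * d)" by (simp add: vecm_def)
lemma unvecm_carrier[simp]: "unvecm d v \<in> carrier_mat d d" by (simp add: unvecm_def)

lemma divmod_lt: fixes p d :: nat assumes "p < d * d" shows "p div d < d" "p mod d < d"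
proof -
  have "d > 0" using assms by (cases d) auto
  then show "p mod d < d" by simp
  show "p div d < d" using assms by (simp add: less_mult_imp_div_less)
qed

lemma ij_lt: fixes i j d :: nat assumes "i < d" "j < d" shows "i * d + j < d * d"
proof -
  have "i * d + j < i * d + d" using assms by simp
  also have "\<dots> = (Suc i) * d" by simp
  also have "\<dots> \<le> d * d" using assms by (intro mult_right_mono) auto
  finally show ?thesis .
qed

lemma unvecm_vecm[simp]: "X \<in> carrier_mat d d \<Longrightarrow> unvecm d (vecm d X) = X"
  by (rule eq_matI) (auto simp: unvecm_def vecm_def ij_lt)

lemma vecm_unvecm[simp]: "v \<in> carrier_vec (d * d) \<Longrightarrow> vecm d (unvecm d v) = v"
  by (rule eq_vecI) (auto simp: unvecm_def vecm_def divmod_lt)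

lemma vecm_inj: "X \<in> carrier_mat d d \<Longrightarrow> Y \<in> carrier_mat d d \<Longrightarrow> vecm d X = vecm d Y \<Longrightarrow> X = Y"
  by (metis unvecm_vecm)

lemma vecm_add: "X \<in> carrier_mat d d \<Longrightarrow> Y \<in> carrier_mat d d \<Longrightarrow> vecm d (X + Y) = vecm d X + vecm d Y"
  by (rule eq_vecI) (auto simp: vecm_def divmod_lt)

lemma vecm_smult: "X \<in> carrier_mat d d \<Longrightarrow> vecm d (c \<cdot>\<^sub>m X) = c \<cdot>\<^sub>v vecm d X"
  by (rule eq_vecI) (auto simp: vecm_def divmod_lt)

lemma vecm_zero: "vecm d (0\<^sub>m d d) = 0\<^sub>v (d * d)"
  by (rule eq_vecI) (auto simp: vecm_def divmod_lt)

lemma sum_divmod: fixes d :: nat shows "(\<Sum>p<d * d. f (p div d) (p mod d)) = (\<Sum>i<d. \<Sum>j<d. f i j)"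
proof -
  have bij: "bij_betw (\<lambda>(i,j). i * d + j) ({..<d} \<times> {..<d}) {..<d * d}"
    by (rule bij_betwI[where g = "\<lambda>p. (p div d, p mod d)"]) (auto simp: ij_lt divmod_lt)
  have "(\<Sum>p<d * d. f (p div d) (p mod d)) = (\<Sum>x\<in>{..<d} \<times> {..<d}. f ((case x of (i,j) \<Rightarrow> i * d + j) div d) ((case x of (i,j) \<Rightarrow> i * d + j) mod d))"
    using sum.reindex_bij_betw[OF bij, of "\<lambda>p. f (p div d) (p mod d)"] by simp
  also have "\<dots> = (\<Sum>x\<in>{..<d} \<times> {..<d}. f (fst x) (snd x))"
    by (intro sum.cong) auto
  also have "\<dots> = (\<Sum>i<d. \<Sum>j<d. f i j)"
    by (simp add: sum.cartesian_product case_prod_beta)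
  finally show ?thesis .
qed

definition fro :: "complex mat \<Rightarrow> complex mat \<Rightarrow> complex" where
  "fro A B = mtrace (adj A * B)"

lemma fro_vecm: assumes "A \<in> carrier_mat d d" "B \<in> carrier_mat d d"
  shows "fro A B = ip (vecm d A) (vecm d B)"
proof -
  have "fro A B = (\<Sum>i<d. \<Sum>k<d. cnj (A $$ (k,i)) * B $$ (k,i))"
    using assms by (simp add: fro_def mtrace_def scalar_prod_def atLeast0LessThan)
  also have "\<dots> = (\<Sum>k<d. \<Sum>i<d. cnj (A $$ (k,i)) * B $$ (k,i))" by (rule sum.swap)
  also have "\<dots> = (\<Sum>p<d * d. cnj (A $$ (p div d, p mod d)) * B $$ (p div d, p mod d))"
    by (rule sum_divmod[symmetric])
  also have "\<dots> = ip (vecm d A) (vecm d B)"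
    by (simp add: ip_def vecm_def atLeast0LessThan)
  finally show ?thesis .
qed

definition islin :: "nat \<Rightarrow> (complex mat \<Rightarrow> complex mat) \<Rightarrow> bool" where
  "islin d L \<longleftrightarrow> (\<exists>Lh \<in> carrier_mat (d * d) (d * d). \<forall>X\<in>carrier_mat d d.
     L X \<in> carrier_mat d d \<and> vecm d (L X) = Lh *\<^sub>v vecm d X)"

lemma islin_carrier: "islin d L \<Longrightarrow> X \<in> carrier_mat d d \<Longrightarrow> L X \<in> carrier_mat d d"
  unfolding islin_def by auto

lemma islin_comp: assumes "islin d L1" "islin d L2" shows "islin d (L1 \<circ> L2)"
proof -
  obtain A where A: "A \<in> carrier_mat (d * d) (d * d)" "\<forall>X\<in>carrier_mat d d. L1 X \<in> carrier_mat d d \<and> vecm d (L1 X) = A *\<^sub>v vecm d X"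
    using assms(1) unfolding islin_def by blast
  obtain B where B: "B \<in> carrier_mat (d * d) (d * d)" "\<forall>X\<in>carrier_mat d d. L2 X \<in> carrier_mat d d \<and> vecm d (L2 X) = B *\<^sub>v vecm d X"
    using assms(2) unfolding islin_def by blast
  show ?thesis unfolding islin_def
  proof (intro bexI[of _ "A * B"] ballI conjI)
    fix X :: "complex mat" assume X: "X \<in> carrier_mat d d"
    show "(L1 \<circ> L2) X \<in> carrier_mat d d" using A B X by auto
    have "vecm d ((L1 \<circ> L2) X) = A *\<^sub>v (B *\<^sub>v vecm d X)" using A B X by auto
    also have "\<dots> = (A * B) *\<^sub>v vecm d X" using A B by (subst assoc_mult_mat_vec) auto
    finally show "vecm d ((L1 \<circ> L2) X) = (A * B) *\<^sub>v vecm d X" .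
  qed (use A B in auto)
qed

lemma islin_add: assumes "islin d L1" "islin d L2" shows "islin d (\<lambda>X. L1 X + L2 X)"
proof -
  obtain A where A: "A \<in> carrier_mat (d * d) (d * d)" "\<forall>X\<in>carrier_mat d d. L1 X \<in> carrier_mat d d \<and> vecm d (L1 X) = A *\<^sub>v vecm d X"
    using assms(1) unfolding islin_def by blast
  obtain B where B: "B \<in> carrier_mat (d * d) (d * d)" "\<forall>X\<in>carrier_mat d d. L2 X \<in> carrier_mat d d \<and> vecm d (L2 X) = B *\<^sub>v vecm d X"
    using assms(2) unfolding islin_def by blast
  show ?thesis unfolding islin_def
  proof (intro bexI[of _ "A + B"] ballI conjI)
    fix X :: "complex mat" assume X: "X \<in> carrier_mat d d"
    show "L1 X + L2 X \<in> carrier_mat d d" using A B X by auto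
    have "vecm d (L1 X + L2 X) = A *\<^sub>v vecm d X + B *\<^sub>v vecm d X" using A B X by (simp add: vecm_add)
    also have "\<dots> = (A + B) *\<^sub>v vecm d X" using A B by (subst add_mult_distrib_mat_vec) auto
    finally show "vecm d (L1 X + L2 X) = (A + B) *\<^sub>v vecm d X" .
  qed (use A B in auto)
qed

lemma islin_zero: "islin d (\<lambda>X. 0\<^sub>m d d)"
  unfolding islin_def by (intro bexI[of _ "0\<^sub>m (d * d) (d * d)"]) (auto simp: vecm_zero)

lemma islin_cong: "islin d L \<Longrightarrow> (\<And>X. X \<in> carrier_mat d d \<Longrightarrow> L' X = L X) \<Longrightarrow> islin d L'"
  unfolding islin_def by auto

lemma islin_msum: "(\<And>K. K \<in> set Ks \<Longrightarrow> islin d (f K)) \<Longrightarrow> islin d (\<lambda>X. msum d (map (\<lambda>K. f K X) Ks))"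
proof (induction Ks)
  case Nil
  then show ?case using islin_zero by simp
next
  case (Cons K Ks)
  then show ?case using islin_add[of d "f K" "\<lambda>X. msum d (map (\<lambda>K. f K X) Ks)"] by simp
qed

lemma sandwich_index: fixes A B X :: "complex mat" assumes "A \<in> carrier_mat d d" "B \<in> carrier_mat d d" "X \<in> carrier_mat d d" "i < d" "j < d"
  shows "(A * X * B) $$ (i,j) = (\<Sum>k<d. \<Sum>l<d. A $$ (i,k) * B $$ (l,j) * X $$ (k,l))"
proof -
  have "(A * X * B) $$ (i,j) = (\<Sum>k<d. A $$ (i,k) * (\<Sum>l<d. X $$ (k,l) * B $$ (l,j)))"
    using assms by (simp add: scalar_prod_def atLeast0LessThan)
  also have "\<dots> = (\<Sum>k<d. \<Sum>l<d. A $$ (i,k) * (X $$ (k,l) * B $$ (l,j)))"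
    by (simp add: sum_distrib_left)
  also have "\<dots> = (\<Sum>k<d. \<Sum>l<d. A $$ (i,k) * B $$ (l,j) * X $$ (k,l))"
    by (intro sum.cong refl) (simp add: algebra_simps)
  finally show ?thesis .
qed

lemma islin_sandwich: assumes A: "A \<in> carrier_mat d d" and B: "B \<in> carrier_mat d d"
  shows "islin d (\<lambda>X. A * X * B)"
  unfolding islin_def
proof (intro bexI[of _ "mat (d * d) (d * d) (\<lambda>(p,q). A $$ (p div d, q div d) * B $$ (q mod d, p mod d))"] ballI conjI)
  fix X :: "complex mat" assume X: "X \<in> carrier_mat d d"
  show "A * X * B \<in> carrier_mat d d" using A B X by simp
  let ?S = "mat (d * d) (d * d) (\<lambda>(p,q). A $$ (p div d, q div d) * B $$ (q mod d, p mod d))"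
  show "vecm d (A * X * B) = ?S *\<^sub>v vecm d X"
  proof (rule eq_vecI)
    fix p assume "p < dim_vec (?S *\<^sub>v vecm d X)"
    then have p: "p < d * d" by simp
    have "(?S *\<^sub>v vecm d X) $ p = (\<Sum>q<d * d. A $$ (p div d, q div d) * B $$ (q mod d, p mod d) * X $$ (q div d, q mod d))"
      using p by (simp add: scalar_prod_def vecm_def atLeast0LessThan)
    also have "\<dots> = (\<Sum>k<d. \<Sum>l<d. A $$ (p div d, k) * B $$ (l, p mod d) * X $$ (k,l))"
      by (rule sum_divmod)
    also have "\<dots> = (A * X * B) $$ (p div d, p mod d)"
      using sandwich_index[OF A B X divmod_lt[OF p]] by simp
    finally show "vecm d (A * X * B) $ p = (?S *\<^sub>v vecm d X) $ p" using p by (simp add: vecm_def)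
  qed simp
qed simp

lemma islin_kdual: assumes "\<And>K. K \<in> set Ks \<Longrightarrow> K \<in> carrier_mat d d" shows "islin d (kdual d Ks)"
  unfolding kdual_def using assms by (intro islin_msum islin_sandwich) auto

section \<open>Self-adjoint linear maps\<close>

lemma mat_vec_unit_index: "(A :: complex mat) \<in> carrier_mat n n \<Longrightarrow> p < n \<Longrightarrow> q < n \<Longrightarrow> (A *\<^sub>v unit_vec n q) $ p = A $$ (p,q)"
  using scalar_prod_right_unit[of q n "row A p"] by simp

lemma ip_unit_left: "w \<in> carrier_vec n \<Longrightarrow> p < n \<Longrightarrow> ip (unit_vec n p) w = w $ p"
proof -
  assume w: "w \<in> carrier_vec n" and p: "p < n"
  have "ip (unit_vec n p) w = (\<Sum>i\<in>{0..<n}. if i = p then w $ i else 0)"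
    unfolding ip_def using p by (intro sum.cong) auto
  then show ?thesis using p by simp
qed

theorem op_decomp: assumes L: "islin d L"
  and sa: "\<And>A B. A \<in> carrier_mat d d \<Longrightarrow> B \<in> carrier_mat d d \<Longrightarrow> fro (L A) B = fro A (L B)"
  shows "\<exists>W ls. unitary (d * d) W \<and> length ls = d * d \<and>
    (\<forall>X\<in>carrier_mat d d. vecm d (L X) = (W * diag_of (map complex_of_real ls) * adj W) *\<^sub>v vecm d X) \<and>
    (\<forall>i<d * d. \<exists>X\<in>carrier_mat d d. X \<noteq> 0\<^sub>m d d \<and> L X = complex_of_real (ls ! i) \<cdot>\<^sub>m X)"
proof -
  let ?n = "d * d"
  obtain Lh where Lh: "Lh \<in> carrier_mat ?n ?n" "\<forall>X\<in>carrier_mat d d. L X \<in> carrier_mat d d \<and> vecm d (L X) = Lh *\<^sub>v vecm d X"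
    using L unfolding islin_def by blast
  have ipsa: "ip (Lh *\<^sub>v a) b = ip a (Lh *\<^sub>v b)" if a: "a \<in> carrier_vec ?n" and b: "b \<in> carrier_vec ?n" for a b
  proof -
    have "fro (L (unvecm d a)) (unvecm d b) = fro (unvecm d a) (L (unvecm d b))" by (rule sa) auto
    then show ?thesis using Lh a b by (simp add: fro_vecm[of _ d])
  qed
  have herm: "adj Lh = Lh"
  proof (rule eq_matI)
    fix p q assume "p < dim_row Lh" "q < dim_col Lh"
    then have pq: "p < ?n" "q < ?n" using Lh by auto
    have "Lh $$ (p,q) = ip (unit_vec ?n p) (Lh *\<^sub>v unit_vec ?n q)"
      using pq Lh by (simp add: ip_unit_left[of _ ?n] mat_vec_unit_index)
    also have "\<dots> = ip (Lh *\<^sub>v unit_vec ?n p) (unit_vec ?n q)" using ipsa pq by simp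
    also have "\<dots> = ip (unit_vec ?n p) (adj Lh *\<^sub>v unit_vec ?n q)"
      using ip_mult_adj[of "adj Lh" ?n ?n "unit_vec ?n p" "unit_vec ?n q"] Lh pq by simp
    also have "\<dots> = adj Lh $$ (p,q)" using pq Lh
      by (simp add: ip_unit_left[of _ ?n] mat_vec_unit_index[of "adj Lh" ?n])
    finally show "adj Lh $$ (p,q) = Lh $$ (p,q)" by simp
  qed (use Lh in auto)
  obtain W ls where W: "unitary ?n W" "length ls = ?n" "Lh = W * diag_of (map complex_of_real ls) * adj W"
    using spectral_thm[OF Lh(1) herm] by blast
  have Wc: "W \<in> carrier_mat ?n ?n" "adj W * W = 1\<^sub>m ?n" using W unitary_def by auto
  define D where "D = diag_of (map complex_of_real ls)"
  have D: "D \<in> carrier_mat ?n ?n" unfolding D_def using W diag_of_carrier[of "map complex_of_real ls"] by simp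
  have LW: "Lh * W = W * D"
  proof -
    have "Lh * W = W * D * (adj W * W)" unfolding W(3) D_def[symmetric] using Wc D
      by (simp add: assoc_mult_mat[of _ ?n ?n _ ?n _ ?n])
    then show ?thesis using Wc D by simp
  qed
  have eig: "\<exists>X\<in>carrier_mat d d. X \<noteq> 0\<^sub>m d d \<and> L X = complex_of_real (ls ! i) \<cdot>\<^sub>m X" if i: "i < ?n" for i
  proof -
    define w where "w = col W i"
    have w: "w \<in> carrier_vec ?n" unfolding w_def using Wc i by auto
    have w1: "ip w w = 1"
      using adj_mult_index[OF Wc(1) Wc(1) i i] Wc(2) i unfolding w_def by simp
    have colD: "col D i = complex_of_real (ls ! i) \<cdot>\<^sub>v unit_vec ?n i"
      using i W(2) unfolding D_def by (intro eq_vecI) (auto simp: diag_of_def)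
    have "Lh *\<^sub>v w = col (Lh * W) i" unfolding w_def using col_mult2[of Lh ?n ?n W ?n i] Lh Wc i by simp
    also have "\<dots> = W *\<^sub>v col D i" unfolding LW using col_mult2[of W ?n ?n D ?n i] Wc D i by simp
    also have "\<dots> = complex_of_real (ls ! i) \<cdot>\<^sub>v (W *\<^sub>v unit_vec ?n i)"
      unfolding colD using Wc by (simp add: mult_mat_vec[of _ ?n ?n])
    also have "W *\<^sub>v unit_vec ?n i = w" unfolding w_def using Wc i
      by (intro eq_vecI) (auto simp: col_def)
    finally have Lw: "Lh *\<^sub>v w = complex_of_real (ls ! i) \<cdot>\<^sub>v w" .
    define X where "X = unvecm d w"
    have X: "X \<in> carrier_mat d d" unfolding X_def by simp
    have vX: "vecm d X = w" unfolding X_def using w by simp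
    have "X \<noteq> 0\<^sub>m d d"
    proof
      assume "X = 0\<^sub>m d d"
      then have "w = 0\<^sub>v ?n" using vX vecm_zero by simp
      then show False using w1 by (simp add: ip_def)
    qed
    moreover have "L X = complex_of_real (ls ! i) \<cdot>\<^sub>m X"
    proof (rule vecm_inj[of _ d])
      show "L X \<in> carrier_mat d d" using Lh X by auto
      show "complex_of_real (ls ! i) \<cdot>\<^sub>m X \<in> carrier_mat d d" using X by simp
      show "vecm d (L X) = vecm d (complex_of_real (ls ! i) \<cdot>\<^sub>m X)"
        using Lh X vX Lw by (simp add: vecm_smult)
    qed
    ultimately show ?thesis using X by blast
  qed
  show ?thesis using W Lh eig by (intro exI[of _ W] exI[of _ ls]) auto
qed


definition fc :: "complex mat \<Rightarrow> real list \<Rightarrow> (real \<Rightarrow> real) \<Rightarrow> complex mat" where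
  "fc V \<mu> g = V * diag_of (map (\<lambda>x. complex_of_real (g x)) \<mu>) * adj V"

lemma cancel_l: "(A :: complex mat) * B = 1\<^sub>m d \<Longrightarrow> A \<in> carrier_mat d d \<Longrightarrow> B \<in> carrier_mat d d \<Longrightarrow> X \<in> carrier_mat d k \<Longrightarrow> A * (B * X) = X"
  by (subst assoc_mult_mat[symmetric, of _ d d _ d _ k]) (auto simp: left_mult_one_mat[of X d k])

lemma fc_carrier[simp]: "unitary d V \<Longrightarrow> length \<mu> = d \<Longrightarrow> fc V \<mu> g \<in> carrier_mat d d"
  unfolding fc_def unitary_def using diag_of_carrier[of "map (\<lambda>x. complex_of_real (g x)) \<mu>"] by auto

lemma fc_mult: assumes V: "unitary d V" and l: "length \<mu> = d"
  shows "fc V \<mu> g * fc V \<mu> h = fc V \<mu> (\<lambda>x. g x * h x)"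
proof -
  have Vc: "V \<in> carrier_mat d d" "adj V * V = 1\<^sub>m d" using V unitary_def by auto
  define D1 where "D1 = diag_of (map (\<lambda>x. complex_of_real (g x)) \<mu>)"
  define D2 where "D2 = diag_of (map (\<lambda>x. complex_of_real (h x)) \<mu>)"
  have D: "D1 \<in> carrier_mat d d" "D2 \<in> carrier_mat d d" unfolding D1_def D2_def using l
    diag_of_carrier[of "map (\<lambda>x. complex_of_real (g x)) \<mu>"] diag_of_carrier[of "map (\<lambda>x. complex_of_real (h x)) \<mu>"] by auto
  have "fc V \<mu> g * fc V \<mu> h = V * (D1 * (adj V * (V * (D2 * adj V))))"
    unfolding fc_def D1_def[symmetric] D2_def[symmetric] using Vc D by (simp add: assoc_mult_mat[of _ d d _ d _ d])
  also have "adj V * (V * (D2 * adj V)) = D2 * adj V" using cancel_l[OF Vc(2) adj_carrier[OF Vc(1)] Vc(1), of "D2 * adj V" d] Vc D by auto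
  also have "V * (D1 * (D2 * adj V)) = V * (D1 * D2) * adj V" using Vc D by (simp add: assoc_mult_mat[of _ d d _ d _ d])
  also have "D1 * D2 = diag_of (map (\<lambda>x. complex_of_real (g x * h x)) \<mu>)"
    unfolding D1_def D2_def diag_of_mult by simp
  finally show ?thesis unfolding fc_def .
qed

lemma fc_adj: assumes "unitary d V" "length \<mu> = d" shows "adj (fc V \<mu> g) = fc V \<mu> g"
  using herm_adj[OF assms(1), of "map g \<mu>"] assms(2) unfolding fc_def by (simp add: o_def)

lemma fc_cong: "(\<And>x. x \<in> set \<mu> \<Longrightarrow> g x = h x) \<Longrightarrow> fc V \<mu> g = fc V \<mu> h"
  unfolding fc_def by (metis (mono_tags, lifting) map_eq_conv)

lemma fc_one: assumes V: "unitary d V" and l: "length \<mu> = d" shows "fc V \<mu> (\<lambda>x. 1) = 1\<^sub>m d"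
proof -
  have Vc: "V \<in> carrier_mat d d" "V * adj V = 1\<^sub>m d" using V unitary_def by auto
  have "diag_of (map (\<lambda>x. complex_of_real 1) \<mu>) = 1\<^sub>m d" using diag_of_one[of \<mu>] l by simp
  then show ?thesis unfolding fc_def using Vc by simp
qed

lemma fc_quad: assumes V: "unitary d V" and l: "length \<mu> = d" and v: "v \<in> carrier_vec d"
  shows "\<exists>q nv. ip v (fc V \<mu> g *\<^sub>v v) = of_real q \<and> ip v v = of_real nv \<and>
     (\<forall>lo. (\<forall>x\<in>set \<mu>. lo \<le> g x) \<longrightarrow> lo * nv \<le> q) \<and>
     (\<forall>hi. (\<forall>x\<in>set \<mu>. g x \<le> hi) \<longrightarrow> q \<le> hi * nv)"
  using herm_quad_bounds[OF V _ _ v, of "map g \<mu>"] l unfolding fc_def by (simp add: o_def)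

lemma islin_add_apply: assumes "islin d L" "A \<in> carrier_mat d d" "B \<in> carrier_mat d d"
  shows "L (A + B) = L A + L B"
proof -
  obtain Lh where Lh: "Lh \<in> carrier_mat (d * d) (d * d)" "\<forall>X\<in>carrier_mat d d. L X \<in> carrier_mat d d \<and> vecm d (L X) = Lh *\<^sub>v vecm d X"
    using assms(1) unfolding islin_def by blast
  show ?thesis
  proof (rule vecm_inj[of _ d])
    show "L (A + B) \<in> carrier_mat d d" "L A + L B \<in> carrier_mat d d" using Lh assms by auto
    show "vecm d (L (A + B)) = vecm d (L A + L B)"
      using Lh assms by (simp add: vecm_add mult_add_distrib_mat_vec[of _ "d * d" "d * d"])
  qed
qed

lemma islin_smult_apply: assumes "islin d L" "A \<in> carrier_mat d d"
  shows "L (c \<cdot>\<^sub>m A) = c \<cdot>\<^sub>m L A"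
proof -
  obtain Lh where Lh: "Lh \<in> carrier_mat (d * d) (d * d)" "\<forall>X\<in>carrier_mat d d. L X \<in> carrier_mat d d \<and> vecm d (L X) = Lh *\<^sub>v vecm d X"
    using assms(1) unfolding islin_def by blast
  show ?thesis
  proof (rule vecm_inj[of _ d])
    show "L (c \<cdot>\<^sub>m A) \<in> carrier_mat d d" "c \<cdot>\<^sub>m L A \<in> carrier_mat d d" using Lh assms by auto
    show "vecm d (L (c \<cdot>\<^sub>m A)) = vecm d (c \<cdot>\<^sub>m L A)"
      using Lh assms by (simp add: vecm_smult mult_mat_vec[of _ "d * d" "d * d"])
  qed
qed

lemma islin_kraus: assumes "kraus_rep d Ks T" shows "islin d T"
proof -
  note K = kraus_repD[OF assms]
  have "islin d (\<lambda>X. msum d (map (\<lambda>K. K * X * adj K) Ks))"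
    using K by (intro islin_msum islin_sandwich) auto
  then show ?thesis using K(3) by (rule islin_cong)
qed

lemma islin_channel: "quantum_channel d T \<Longrightarrow> islin d T"
  unfolding quantum_channel_def using islin_kraus by blast

lemma islin_dual: assumes "quantum_channel d T" shows "islin d (channel_dual d T)"
proof -
  obtain Ks where K: "kraus_rep d Ks T" "\<forall>B. channel_dual d T B = kdual d Ks B" using channel_dual_kraus[OF assms] by auto
  have "islin d (kdual d Ks)" using islin_kdual[OF kraus_repD(1)[OF K(1)]] by blast
  then show ?thesis by (rule islin_cong) (metis K(2))
qed


section \<open>Conjugating a detailed-balance channel into a self-adjoint map\<close>

lemma cancel_sq: "(A :: complex mat) * B = 1\<^sub>m d \<Longrightarrow> A \<in> carrier_mat d d \<Longrightarrow> B \<in> carrier_mat d d \<Longrightarrow> X \<in> carrier_mat d d \<Longrightarrow> A * (B * X) = X"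
  using cancel_l[of A B d X d] by simp

lemma sI_fro: assumes Ph: "Ph \<in> carrier_mat d d" "adj Ph = Ph" and Qh: "Qh \<in> carrier_mat d d" "adj Qh = Qh"
  and A: "A \<in> carrier_mat d d" and B: "B \<in> carrier_mat d d"
  shows "mtrace (adj A * (Ph * Ph) * B * (Qh * Qh)) = fro (Ph * A * Qh) (Ph * B * Qh)"
proof -
  define R where "R = adj A * (Ph * (Ph * (B * Qh)))"
  have R: "R \<in> carrier_mat d d" unfolding R_def using Ph Qh A B by simp
  have "fro (Ph * A * Qh) (Ph * B * Qh) = mtrace (Qh * R)"
    unfolding fro_def R_def using Ph Qh A B
    by (simp add: adj_mult[of _ d d _ d] assoc_mult_mat[of _ d d _ d _ d])
  also have "\<dots> = mtrace (R * Qh)" using mtrace_comm[of Qh d d R] Ph Qh R by simp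
  also have "R * Qh = adj A * (Ph * Ph) * B * (Qh * Qh)"
    unfolding R_def using Ph Qh A B by (simp add: assoc_mult_mat[of _ d d _ d _ d])
  finally show ?thesis by simp
qed

lemma gamma_rel: assumes T: "quantum_channel d T"
  and Ph: "Ph \<in> carrier_mat d d" "adj Ph = Ph" and Qh: "Qh \<in> carrier_mat d d" "adj Qh = Qh"
  and db: "\<forall>A\<in>carrier_mat d d. \<forall>B\<in>carrier_mat d d.
     mtrace (adj A * (Ph * Ph) * channel_dual d T B * (Qh * Qh)) = mtrace (adj (channel_dual d T A) * (Ph * Ph) * B * (Qh * Qh))"
  and Y: "Y \<in> carrier_mat d d"
  shows "T (Ph * Ph * Y * (Qh * Qh)) = Ph * Ph * channel_dual d T Y * (Qh * Qh)"
proof -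
  obtain Ks where K: "kraus_rep d Ks T" "\<forall>B. channel_dual d T B = kdual d Ks B" using channel_dual_kraus[OF T] by auto
  note Kc = kraus_repD(1)[OF K(1)]
  let ?P = "Ph * Ph" and ?Q = "Qh * Qh"
  have PQ: "?P \<in> carrier_mat d d" "?Q \<in> carrier_mat d d" using Ph Qh by auto
  have X: "?P * Y * ?Q \<in> carrier_mat d d" using PQ Y by simp
  have TdY: "kdual d Ks Y \<in> carrier_mat d d" using kdual_carrier[OF Kc Y] .
  have e: "\<And>B. channel_dual d T B = kdual d Ks B" using K(2) by simp
  show ?thesis unfolding e
  proof (rule trace_ext)
    show "T (?P * Y * ?Q) \<in> carrier_mat d d" using kraus_carrier[OF K(1) X] .
    show "?P * kdual d Ks Y * ?Q \<in> carrier_mat d d" using PQ TdY by simp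
    fix Z :: "complex mat" assume Z: "Z \<in> carrier_mat d d"
    define A where "A = adj Z"
    have A: "A \<in> carrier_mat d d" "adj A = Z" unfolding A_def using Z by auto
    have TdA: "kdual d Ks A \<in> carrier_mat d d" using kdual_carrier[OF Kc A(1)] .
    have "mtrace (T (?P * Y * ?Q) * Z) = mtrace (Z * T (?P * Y * ?Q))"
      using mtrace_comm[of "T (?P * Y * ?Q)" d d Z] kraus_carrier[OF K(1) X] Z by simp
    also have "\<dots> = mtrace (kdual d Ks Z * (?P * Y * ?Q))" using kraus_duality[OF K(1) X Z] .
    also have "kdual d Ks Z = adj (kdual d Ks A)" using kdual_adj[OF Kc A(1)] A by simp
    also have "mtrace (adj (kdual d Ks A) * (?P * Y * ?Q)) = mtrace (adj (kdual d Ks A) * ?P * Y * ?Q)"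
      using TdA PQ Y by (simp add: assoc_mult_mat[of _ d d _ d _ d])
    also have "\<dots> = mtrace (adj A * ?P * kdual d Ks Y * ?Q)" using db[rule_format, OF A(1) Y] unfolding e by simp
    also have "\<dots> = mtrace (Z * (?P * kdual d Ks Y * ?Q))"
      using A PQ TdY Z by (simp add: assoc_mult_mat[of _ d d _ d _ d])
    also have "\<dots> = mtrace ((?P * kdual d Ks Y * ?Q) * Z)"
      using mtrace_comm[of Z d d "?P * kdual d Ks Y * ?Q"] PQ TdY Z by simp
    finally show "mtrace (T (?P * Y * ?Q) * Z) = mtrace (?P * kdual d Ks Y * ?Q * Z)" .
  qed
qed

definition opL :: "nat \<Rightarrow> complex mat \<Rightarrow> complex mat \<Rightarrow> complex mat \<Rightarrow> complex mat \<Rightarrow> (complex mat \<Rightarrow> complex mat) \<Rightarrow> complex mat \<Rightarrow> complex mat" where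
  "opL d Ph Qh Phi Qhi T X = Ph * channel_dual d T (Phi * X * Qhi) * Qh"

lemma main_ops: assumes T: "quantum_channel d T"
  and Ph: "Ph \<in> carrier_mat d d" "adj Ph = Ph" and Qh: "Qh \<in> carrier_mat d d" "adj Qh = Qh"
  and Phi: "Phi \<in> carrier_mat d d" and Qhi: "Qhi \<in> carrier_mat d d"
  and inv: "Ph * Phi = 1\<^sub>m d" "Phi * Ph = 1\<^sub>m d" "Qh * Qhi = 1\<^sub>m d" "Qhi * Qh = 1\<^sub>m d"
  and db: "\<forall>A\<in>carrier_mat d d. \<forall>B\<in>carrier_mat d d.
     mtrace (adj A * (Ph * Ph) * channel_dual d T B * (Qh * Qh)) = mtrace (adj (channel_dual d T A) * (Ph * Ph) * B * (Qh * Qh))"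
  shows "islin d (opL d Ph Qh Phi Qhi T)"
    "\<And>A B. A \<in> carrier_mat d d \<Longrightarrow> B \<in> carrier_mat d d \<Longrightarrow> fro (opL d Ph Qh Phi Qhi T A) B = fro A (opL d Ph Qh Phi Qhi T B)"
    "\<And>X. X \<in> carrier_mat d d \<Longrightarrow> T (Ph * X * Qh) = Ph * opL d Ph Qh Phi Qhi T X * Qh"
proof -
  let ?L = "opL d Ph Qh Phi Qhi T" and ?Td = "channel_dual d T"
  have Tdc: "\<And>X. X \<in> carrier_mat d d \<Longrightarrow> ?Td X \<in> carrier_mat d d" using channel_dual_carrier[OF T] .
  note c1 = cancel_sq[OF inv(1) Ph(1) Phi] and c2 = cancel_sq[OF inv(2) Phi Ph(1)]
  have r1: "X * Qh * Qhi = X" "X * Qhi * Qh = X" if "X \<in> carrier_mat d d" for X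
    using that Qh Qhi inv by (simp_all add: assoc_mult_mat[of _ d d _ d _ d])
  have bk: "Ph * (Phi * X * Qhi) * Qh = X" if X: "X \<in> carrier_mat d d" for X
  proof -
    have "Ph * (Phi * X * Qhi) * Qh = Ph * (Phi * X) * Qhi * Qh"
      using X Ph Phi Qh Qhi by (simp add: assoc_mult_mat[of _ d d _ d _ d])
    also have "\<dots> = X" using c1[OF X] r1 X Ph Phi Qh Qhi
      by (simp add: assoc_mult_mat[of _ d d _ d _ d])
    finally show ?thesis .
  qed
  have fwd: "Phi * (Ph * X * Qh) * Qhi = X" if X: "X \<in> carrier_mat d d" for X
  proof -
    have "Phi * (Ph * X * Qh) * Qhi = Phi * (Ph * X) * Qh * Qhi"
      using X Ph Phi Qh Qhi by (simp add: assoc_mult_mat[of _ d d _ d _ d])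
    also have "\<dots> = X" using c2[OF X] r1 X Ph Phi Qh Qhi
      by (simp add: assoc_mult_mat[of _ d d _ d _ d])
    finally show ?thesis .
  qed
  have "islin d ((\<lambda>X. Ph * X * Qh) \<circ> (?Td \<circ> (\<lambda>X. Phi * X * Qhi)))"
    using islin_sandwich[OF Ph(1) Qh(1)] islin_sandwich[OF Phi Qhi] islin_dual[OF T]
    by (intro islin_comp) auto
  then show "islin d ?L" by (rule islin_cong) (simp add: opL_def)
  show "fro (?L A) B = fro A (?L B)" if A: "A \<in> carrier_mat d d" and B: "B \<in> carrier_mat d d" for A B
  proof -
    define a where "a = Phi * A * Qhi"
    define b where "b = Phi * B * Qhi"
    have ab: "a \<in> carrier_mat d d" "b \<in> carrier_mat d d" unfolding a_def b_def using A B Phi Qhi by auto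
    have A': "A = Ph * a * Qh" unfolding a_def using bk[OF A] by simp
    have B': "B = Ph * b * Qh" unfolding b_def using bk[OF B] by simp
    have "fro (?L A) B = fro (Ph * ?Td a * Qh) (Ph * b * Qh)" unfolding opL_def a_def B'[symmetric] ..
    also have "\<dots> = mtrace (adj (?Td a) * (Ph * Ph) * b * (Qh * Qh))"
      using sI_fro[OF Ph Qh Tdc[OF ab(1)] ab(2)] by simp
    also have "\<dots> = mtrace (adj a * (Ph * Ph) * ?Td b * (Qh * Qh))" using db[rule_format, OF ab] by simp
    also have "\<dots> = fro (Ph * a * Qh) (Ph * ?Td b * Qh)" using sI_fro[OF Ph Qh ab(1) Tdc[OF ab(2)]] by simp
    also have "\<dots> = fro A (?L B)" unfolding opL_def b_def A'[symmetric] ..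
    finally show ?thesis .
  qed
  show "T (Ph * X * Qh) = Ph * ?L X * Qh" if X: "X \<in> carrier_mat d d" for X
  proof -
    define Y where "Y = Phi * X * Qhi"
    have Yc: "Y \<in> carrier_mat d d" unfolding Y_def using X Phi Qhi by auto
    have "Ph * X * Qh = Ph * Ph * Y * (Qh * Qh)"
    proof -
      have "Ph * Ph * Y * (Qh * Qh) = Ph * (Ph * Y * Qh) * Qh"
        using Ph Qh Yc by (simp add: assoc_mult_mat[of _ d d _ d _ d])
      also have "Ph * Y * Qh = X" unfolding Y_def using bk[OF X] .
      finally show ?thesis by simp
    qed
    then have "T (Ph * X * Qh) = Ph * Ph * ?Td Y * (Qh * Qh)"
      using gamma_rel[OF T Ph Qh db Yc] by simp
    also have "\<dots> = Ph * ?L X * Qh" unfolding opL_def Y_def[symmetric]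
      using Ph Qh Tdc[OF Yc] by (simp add: assoc_mult_mat[of _ d d _ d _ d])
    finally show ?thesis .
  qed
qed


lemma smult_smult_mat: "(a :: complex) \<cdot>\<^sub>m (b \<cdot>\<^sub>m A) = (a * b) \<cdot>\<^sub>m A"
  by (rule eq_matI) auto

lemma smult_mat_vec: "A \<in> carrier_mat n k \<Longrightarrow> v \<in> carrier_vec k \<Longrightarrow> (c \<cdot>\<^sub>m A) *\<^sub>v v = c \<cdot>\<^sub>v (A *\<^sub>v (v :: complex vec))"
  by (intro eq_vecI) (auto simp: scalar_prod_def sum_distrib_left ac_simps)

lemma ip_add_mat: assumes "A \<in> carrier_mat n n" "B \<in> carrier_mat n n" "v \<in> carrier_vec n"
  shows "ip v ((A + B) *\<^sub>v v) = ip v (A *\<^sub>v v) + ip v (B *\<^sub>v v)"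
  using assms by (simp add: add_mult_distrib_mat_vec[of _ n n] ip_add_right[of _ n])

lemma ip_smult_mat: assumes "A \<in> carrier_mat n n" "v \<in> carrier_vec n"
  shows "ip v ((c \<cdot>\<^sub>m A) *\<^sub>v v) = c * ip v (A *\<^sub>v v)"
  using assms by (simp add: smult_mat_vec[of _ n n] ip_smult_right[of _ n])

lemma ip_one_mat: "v \<in> carrier_vec n \<Longrightarrow> ip v (1\<^sub>m n *\<^sub>v v) = ip v v"
  by simp

lemma Re_sum_list: "Re (sum_list (map f xs)) = sum_list (map (\<lambda>x. Re (f x)) xs)"
  by (induction xs) auto

lemma Im_sum_list: "Im (sum_list (map f xs)) = sum_list (map (\<lambda>x. Im (f x)) xs)"
  by (induction xs) auto

definition psd :: "nat \<Rightarrow> complex mat \<Rightarrow> bool" where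
  "psd d B \<longleftrightarrow> (\<forall>w\<in>carrier_vec d. Im (ip w (B *\<^sub>v w)) = 0 \<and> 0 \<le> Re (ip w (B *\<^sub>v w)))"

lemma dual_psd: assumes T: "quantum_channel d T" and B: "B \<in> carrier_mat d d" and p: "psd d B"
  shows "psd d (channel_dual d T B)"
proof -
  obtain Ks where K: "kraus_rep d Ks T" "\<forall>B. channel_dual d T B = kdual d Ks B" using channel_dual_kraus[OF T] by auto
  note Kc = kraus_repD(1)[OF K(1)]
  show ?thesis unfolding psd_def
  proof (intro ballI conjI)
    fix v :: "complex vec" assume v: "v \<in> carrier_vec d"
    have e: "ip v (channel_dual d T B *\<^sub>v v) = (\<Sum>K\<leftarrow>Ks. ip (K *\<^sub>v v) (B *\<^sub>v (K *\<^sub>v v)))"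
      using kdual_quad[OF Kc B v] K(2) by simp
    have w: "K *\<^sub>v v \<in> carrier_vec d" if "K \<in> set Ks" for K using Kc[OF that] v by simp
    show "Im (ip v (channel_dual d T B *\<^sub>v v)) = 0"
      unfolding e Im_sum_list using p w unfolding psd_def by (simp cong: map_cong)
    show "0 \<le> Re (ip v (channel_dual d T B *\<^sub>v v))"
      unfolding e Re_sum_list using p w unfolding psd_def by (intro sum_list_nonneg) auto
  qed
qed

lemma dual_adj: assumes T: "quantum_channel d T" and X: "X \<in> carrier_mat d d"
  shows "channel_dual d T (adj X) = adj (channel_dual d T X)"
proof -
  obtain Ks where K: "kraus_rep d Ks T" "\<forall>B. channel_dual d T B = kdual d Ks B" using channel_dual_kraus[OF T] by auto
  show ?thesis using kdual_adj[OF kraus_repD(1)[OF K(1)] X] K(2) by simp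
qed

lemma dual_one: assumes T: "quantum_channel d T" shows "channel_dual d T (1\<^sub>m d) = 1\<^sub>m d"
proof -
  obtain Ks where K: "kraus_rep d Ks T" "\<forall>B. channel_dual d T B = kdual d Ks B" using channel_dual_kraus[OF T] by auto
  show ?thesis using kdual_one[OF K(1)] K(2) by simp
qed

lemma herm_col_eig: assumes W: "unitary m W" and ls: "length ls = m"
  and A: "A = W * diag_of (map complex_of_real ls) * adj W" and k: "k < m"
  shows "A *\<^sub>v col W k = complex_of_real (ls ! k) \<cdot>\<^sub>v col W k" "ip (col W k) (col W k) = 1"
proof -
  have Wc: "W \<in> carrier_mat m m" "adj W * W = 1\<^sub>m m" using W unitary_def by auto
  define D where "D = diag_of (map complex_of_real ls)"
  have D: "D \<in> carrier_mat m m" unfolding D_def using ls diag_of_carrier[of "map complex_of_real ls"] by simp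
  have AW: "A * W = W * D"
  proof -
    have "A * W = W * D * (adj W * W)" unfolding A D_def[symmetric] using Wc D
      by (simp add: assoc_mult_mat[of _ m m _ m _ m])
    then show ?thesis using Wc D by simp
  qed
  have colD: "col D k = complex_of_real (ls ! k) \<cdot>\<^sub>v unit_vec m k"
    using k ls unfolding D_def by (intro eq_vecI) (auto simp: diag_of_def)
  have Ac: "A \<in> carrier_mat m m" unfolding A using Wc D D_def by simp
  have "A *\<^sub>v col W k = col (A * W) k" using col_mult2[of A m m W m k] Ac Wc k by simp
  also have "\<dots> = W *\<^sub>v col D k" unfolding AW using col_mult2[of W m m D m k] Wc D k by simp
  also have "\<dots> = complex_of_real (ls ! k) \<cdot>\<^sub>v (W *\<^sub>v unit_vec m k)"
    unfolding colD using Wc by (simp add: mult_mat_vec[of _ m m])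
  also have "W *\<^sub>v unit_vec m k = col W k" using Wc k by (intro eq_vecI) (auto simp: col_def)
  finally show "A *\<^sub>v col W k = complex_of_real (ls ! k) \<cdot>\<^sub>v col W k" .
  show "ip (col W k) (col W k) = 1"
    using adj_mult_index[OF Wc(1) Wc(1) k k] Wc(2) k by simp
qed

lemma herm_nonzero_eig: assumes W: "unitary m W" and ls: "length ls = m"
  and A: "A = W * diag_of (map complex_of_real ls) * adj W" and nz: "A \<noteq> 0\<^sub>m m m"
  shows "\<exists>k<m. (\<forall>x\<in>set ls. \<bar>x\<bar> \<le> \<bar>ls ! k\<bar>) \<and> ls ! k \<noteq> 0"
proof -
  have Wc: "W \<in> carrier_mat m m" using W unitary_def by auto
  have ne: "set ls \<noteq> {}"
  proof
    assume "set ls = {}"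
    then have "m = 0" using ls by simp
    then show False using nz A Wc by (auto intro!: eq_matI)
  qed
  define mx where "mx = Max (abs ` set ls)"
  have "mx \<in> abs ` set ls" unfolding mx_def using ne by (intro Max_in) auto
  then obtain k where k: "k < m" "\<bar>ls ! k\<bar> = mx" using ls by (auto simp: in_set_conv_nth)
  have le: "\<forall>x\<in>set ls. \<bar>x\<bar> \<le> \<bar>ls ! k\<bar>" unfolding k(2) mx_def by auto
  have "ls ! k \<noteq> 0"
  proof
    assume "ls ! k = 0"
    then have z: "\<forall>x\<in>set ls. x = 0" using le by auto
    have "diag_of (map complex_of_real ls) = 0\<^sub>m m m"
      using z ls by (intro eq_matI) (auto simp: diag_of_def)
    then have "A = 0\<^sub>m m m" unfolding A using Wc by simp
    then show False using nz by simp
  qed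
  then show ?thesis using k le by blast
qed

section \<open>Eigenvalues of the dual of a channel\<close>

theorem dual_eig_bound: assumes T: "quantum_channel d T" and Y: "Y \<in> carrier_mat d d" "Y \<noteq> 0\<^sub>m d d"
  and eig: "channel_dual d T Y = complex_of_real l \<cdot>\<^sub>m Y"
  shows "\<bar>l\<bar> \<le> 1"
proof -
  let ?Td = "channel_dual d T"
  have lin: "islin d ?Td" using islin_dual[OF T] .
  obtain Z where Z: "Z \<in> carrier_mat d d" "adj Z = Z" "Z \<noteq> 0\<^sub>m d d" "?Td Z = complex_of_real l \<cdot>\<^sub>m Z"
  proof (cases "Y + adj Y = 0\<^sub>m d d")
    case True
    define Z where "Z = \<i> \<cdot>\<^sub>m Y"
    have aY: "adj Y = - Y"
    proof (rule eq_matI)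
      fix i j assume "i < dim_row (- Y)" "j < dim_col (- Y)"
      then have ij: "i < d" "j < d" using Y by auto
      have "(Y + adj Y) $$ (i,j) = 0" using True ij by simp
      then show "adj Y $$ (i,j) = (- Y) $$ (i,j)" using ij Y by (simp add: add_eq_0_iff)
    qed (use Y in auto)
    have "adj Z = Z" unfolding Z_def adj_smult aY by (rule eq_matI) (use Y in auto)
    moreover have "Z \<noteq> 0\<^sub>m d d"
    proof
      assume "Z = 0\<^sub>m d d"
      then have "(- \<i>) \<cdot>\<^sub>m Z = 0\<^sub>m d d" by simp
      moreover have "(- \<i>) \<cdot>\<^sub>m Z = Y" unfolding Z_def by (rule eq_matI) (use Y in auto)
      ultimately show False using Y by simp
    qed
    moreover have "?Td Z = complex_of_real l \<cdot>\<^sub>m Z"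
      unfolding Z_def islin_smult_apply[OF lin Y(1)] eig by (rule eq_matI) (use Y in auto)
    ultimately show ?thesis using Y by (intro that[of Z]) (auto simp: Z_def)
  next
    case False
    define Z where "Z = Y + adj Y"
    have "adj Z = Z" unfolding Z_def using Y by (simp add: adj_add[of _ d d] comm_add_mat[of _ d d])
    moreover have "?Td Z = complex_of_real l \<cdot>\<^sub>m Z"
    proof -
      have "?Td Z = ?Td Y + ?Td (adj Y)" unfolding Z_def using islin_add_apply[OF lin Y(1)] Y by simp
      also have "?Td (adj Y) = adj (?Td Y)" using dual_adj[OF T Y(1)] .
      also have "\<dots> = complex_of_real l \<cdot>\<^sub>m adj Y" unfolding eig adj_smult by simp
      finally show ?thesis unfolding eig Z_def using Y by (simp add: add_smult_distrib_left_mat[of _ d d])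
    qed
    ultimately show ?thesis using Y False by (intro that[of Z]) (auto simp: Z_def)
  qed
  obtain U z where U: "unitary d U" "length z = d" "Z = U * diag_of (map complex_of_real z) * adj U"
    using spectral_thm[OF Z(1) Z(2)] by blast
  obtain k where k: "k < d" "\<forall>x\<in>set z. \<bar>x\<bar> \<le> \<bar>z ! k\<bar>" "z ! k \<noteq> 0"
    using herm_nonzero_eig[OF U Z(3)] by blast
  define mx where "mx = \<bar>z ! k\<bar>"
  have mx: "mx > 0" unfolding mx_def using k by simp
  define e where "e = col U k"
  note ek = herm_col_eig[OF U k(1), folded e_def]
  have e: "e \<in> carrier_vec d" unfolding e_def using U k unitary_def by auto
  have Tdc: "?Td X \<in> carrier_mat d d" if "X \<in> carrier_mat d d" for X using channel_dual_carrier[OF T that] .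
  have bound: "0 \<le> mx + sg * l * z ! k" if sg: "sg = 1 \<or> sg = -1" for sg :: real
  proof -
    define B where "B = complex_of_real mx \<cdot>\<^sub>m 1\<^sub>m d + complex_of_real sg \<cdot>\<^sub>m Z"
    have Bc: "B \<in> carrier_mat d d" unfolding B_def using Z by simp
    have pB: "psd d B" unfolding psd_def
    proof (intro ballI)
      fix w :: "complex vec" assume w: "w \<in> carrier_vec d"
      obtain q nv where b: "ip w (Z *\<^sub>v w) = of_real q" "ip w w = of_real nv"
        "\<forall>lo. (\<forall>x\<in>set z. lo \<le> x) \<longrightarrow> lo * nv \<le> q" "\<forall>hi. (\<forall>x\<in>set z. x \<le> hi) \<longrightarrow> q \<le> hi * nv"
        using herm_quad_bounds[OF U w] by blast
      have lo: "- mx * nv \<le> q" using b(3) k(2) unfolding mx_def by (metis abs_le_iff minus_le_iff)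
      have hi: "q \<le> mx * nv" using b(4) k(2) unfolding mx_def by (metis abs_le_iff)
      have "ip w (B *\<^sub>v w) = of_real (mx * nv + sg * q)"
        unfolding B_def using Z w b by (simp add: ip_add_mat[of _ d] ip_smult_mat[of _ d])
      moreover have "0 \<le> mx * nv + sg * q" using sg lo hi by auto
      ultimately show "Im (ip w (B *\<^sub>v w)) = 0 \<and> 0 \<le> Re (ip w (B *\<^sub>v w))" by simp
    qed
    have TB: "?Td B = complex_of_real mx \<cdot>\<^sub>m 1\<^sub>m d + complex_of_real (sg * l) \<cdot>\<^sub>m Z"
    proof -
      have "?Td B = complex_of_real mx \<cdot>\<^sub>m ?Td (1\<^sub>m d) + complex_of_real sg \<cdot>\<^sub>m ?Td Z"
        unfolding B_def using Z by (simp add: islin_add_apply[OF lin] islin_smult_apply[OF lin])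
      also have "\<dots> = complex_of_real mx \<cdot>\<^sub>m 1\<^sub>m d + complex_of_real (sg * l) \<cdot>\<^sub>m Z"
        unfolding dual_one[OF T] Z(4) by (simp add: smult_smult_mat)
      finally show ?thesis .
    qed
    have "psd d (?Td B)" using dual_psd[OF T Bc pB] .
    then have "0 \<le> Re (ip e (?Td B *\<^sub>v e))" using e unfolding psd_def by auto
    moreover have "ip e (?Td B *\<^sub>v e) = complex_of_real (mx + sg * l * z ! k)"
      unfolding TB using Z e ek by (simp add: ip_add_mat[of _ d] ip_smult_mat[of _ d] ip_smult_right[of _ d])
    ultimately show ?thesis by simp
  qed
  have "0 \<le> mx + l * z ! k" using bound[of 1] by simp
  moreover have "0 \<le> mx - l * z ! k" using bound[of "-1"] by simp
  ultimately have "\<bar>l * z ! k\<bar> \<le> mx" by auto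
  then have "\<bar>l\<bar> * mx \<le> mx" unfolding mx_def by (simp add: abs_mult)
  then show ?thesis using mx by simp
qed


lemma herm_fix: assumes W: "unitary m W" and ls: "length ls = m"
  and A: "A = W * diag_of (map complex_of_real ls) * adj W" and v: "v \<in> carrier_vec m"
  and le1: "\<forall>x\<in>set ls. x \<le> 1" and eq: "ip v (A *\<^sub>v v) = ip v v"
  shows "A *\<^sub>v v = v"
proof -
  define c where "c = adj W *\<^sub>v v"
  have Wc: "W \<in> carrier_mat m m" using W unitary_def by auto
  have cc: "c \<in> carrier_vec m" unfolding c_def using Wc v by simp
  note h = herm_quad[OF W ls A v, folded c_def]
  note e = herm_decomp_apply[OF W ls A v, folded c_def]
  have "complex_of_real (\<Sum>i<m. ls ! i * (cmod (c $ i))^2) = ip v (A *\<^sub>v v)" by (rule h(1)[symmetric])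
  also have "\<dots> = ip v v" by (rule eq)
  also have "\<dots> = complex_of_real (\<Sum>i<m. (cmod (c $ i))^2)" by (rule h(2))
  finally have "(\<Sum>i<m. ls ! i * (cmod (c $ i))^2) = (\<Sum>i<m. (cmod (c $ i))^2)" by (simp only: of_real_eq_iff)
  then have "(\<Sum>i<m. (1 - ls ! i) * (cmod (c $ i))^2) = 0"
    by (simp add: algebra_simps sum_subtractf)
  moreover have "\<forall>i\<in>{..<m}. 0 \<le> (1 - ls ! i) * (cmod (c $ i))^2"
  proof
    fix i assume "i \<in> {..<m}"
    then have "ls ! i \<in> set ls" using ls by simp
    then have "ls ! i \<le> 1" using le1 by blast
    then show "0 \<le> (1 - ls ! i) * (cmod (c $ i))^2" by (intro mult_nonneg_nonneg) auto
  qed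
  ultimately have z: "\<forall>i\<in>{..<m}. (1 - ls ! i) * (cmod (c $ i))^2 = 0"
    using sum_nonneg_eq_0_iff[of "{..<m}" "\<lambda>i. (1 - ls ! i) * (cmod (c $ i))^2"] by (simp only: finite_lessThan simp_thms)
  have "vmul ls c = c"
  proof (rule eq_vecI)
    fix i assume "i < dim_vec c"
    then have i: "i < m" using cc by simp
    have "(1 - ls ! i) * (cmod (c $ i))^2 = 0" using z i by blast
    then have "1 - ls ! i = 0 \<or> (cmod (c $ i))^2 = 0" by (simp only: mult_eq_0_iff)
    then have "ls ! i = 1 \<or> c $ i = 0" by simp
    then show "vmul ls c $ i = c $ i" using i cc by (auto simp: vmul_def)
  qed (simp add: vmul_def)
  then show ?thesis using e by simp
qed

lemma ip_cnj: "dim_vec w = dim_vec v \<Longrightarrow> map_vec cnj v \<bullet> w = ip v w"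
  by (simp add: scalar_prod_def ip_def)

lemma herm_fixed_rho: assumes N: "quantum_channel d N" and fp: "fixed_points d N = {\<rho>}"
  and V: "unitary d V" "length \<mu> = d" "\<forall>x\<in>set \<mu>. x > 0" "\<rho> = V * diag_of (map complex_of_real \<mu>) * adj V"
  and d: "d > 0"
  and W: "W \<in> carrier_mat d d" "adj W = W" "N W = W"
  shows "\<exists>c. W = c \<cdot>\<^sub>m \<rho>"
proof -
  have rs: "is_state d \<rho>" "N \<rho> = \<rho>" using fp unfolding fixed_points_def by auto
  have rc: "\<rho> \<in> carrier_mat d d" "adj \<rho> = \<rho>" "mtrace \<rho> = 1" using rs unfolding is_state_def by auto
  have lin: "islin d N" using islin_channel[OF N] .
  obtain U w where U: "unitary d U" "length w = d" "W = U * diag_of (map complex_of_real w) * adj U"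
    using spectral_thm[OF W(1) W(2)] by blast
  have wne: "set w \<noteq> {}" using U(2) d by auto
  have mune: "set \<mu> \<noteq> {}" using V(2) d by auto
  define mw where "mw = Max (abs ` set w)"
  have mw: "\<forall>x\<in>set w. \<bar>x\<bar> \<le> mw" unfolding mw_def by auto
  have mw0: "0 \<le> mw"
  proof -
    obtain x where "x \<in> set w" using wne by (metis ex_in_conv)
    then show ?thesis using mw by (meson abs_ge_zero order.trans)
  qed
  define lo where "lo = Min (set \<mu>)"
  have lo: "lo > 0" "\<forall>x\<in>set \<mu>. lo \<le> x" unfolding lo_def using V(3) mune by auto
  define c where "c = mw / lo + real d * mw + 1"
  have clo: "mw \<le> c * lo"
  proof -
    have "mw = mw / lo * lo" using lo by simp
    also have "\<dots> \<le> c * lo" unfolding c_def using lo mw0 by (intro mult_right_mono) auto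
    finally show ?thesis .
  qed
  define sw where "sw = (\<Sum>i<d. w ! i)"
  have trW: "mtrace W = of_real sw"
    unfolding U(3) sw_def using mtrace_unitary_conj[OF U(1), of "diag_of (map complex_of_real w)"] U(2)
      diag_of_carrier[of "map complex_of_real w"]
    by (simp add: mtrace_diag_of)
  have swlo: "- (real d * mw) \<le> sw"
  proof -
    have "(\<Sum>i<d. - mw) \<le> sw" unfolding sw_def using mw U(2)
      by (intro sum_mono) (metis abs_le_iff minus_le_iff nth_mem lessThan_iff)
    then show ?thesis by simp
  qed
  define t where "t = sw + c"
  have tpos: "t > 0" unfolding t_def c_def using swlo lo mw0 by (smt (verit) divide_nonneg_pos)
  define \<sigma> where "\<sigma> = complex_of_real (1 / t) \<cdot>\<^sub>m (W + complex_of_real c \<cdot>\<^sub>m \<rho>)"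
  have sc: "\<sigma> \<in> carrier_mat d d" unfolding \<sigma>_def using W rc by simp
  have sadj: "adj \<sigma> = \<sigma>"
    unfolding \<sigma>_def adj_smult using W rc by (simp add: adj_add[of _ d d] adj_smult)
  have str: "mtrace \<sigma> = 1"
  proof -
    have "mtrace \<sigma> = complex_of_real (1 / t) * (mtrace W + complex_of_real c * mtrace \<rho>)"
      unfolding \<sigma>_def using W rc by (simp add: mtrace_smult[of _ d] mtrace_add[of _ d])
    also have "\<dots> = 1"
    proof -
      have nz: "complex_of_real c + complex_of_real sw \<noteq> 0"
        using tpos unfolding t_def by (metis add.commute of_real_add of_real_eq_0_iff less_irrefl)
      show ?thesis using rc(3) trW nz unfolding t_def by (simp add: field_simps)
    qed
    finally show ?thesis .
  qed
  have spsd: "\<exists>r\<ge>0. map_vec cnj v \<bullet> (\<sigma> *\<^sub>v v) = complex_of_real r" if v: "v \<in> carrier_vec d" for v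
  proof -
    obtain q nv where b: "ip v (W *\<^sub>v v) = of_real q" "ip v v = of_real nv"
        "\<forall>lo. (\<forall>x\<in>set w. lo \<le> x) \<longrightarrow> lo * nv \<le> q"
      using herm_quad_bounds[OF U v] by blast
    obtain qr nr where br: "ip v (\<rho> *\<^sub>v v) = of_real qr" "ip v v = of_real nr"
        "\<forall>lo'. (\<forall>x\<in>set \<mu>. lo' \<le> x) \<longrightarrow> lo' * nr \<le> qr"
      using herm_quad_bounds[OF V(1) V(2) V(4) v] by blast
    have nvr: "nr = nv" using b(2) br(2) by simp
    have nv0: "0 \<le> nv" using b(2) ip_vnorm[of v] by (metis of_real_eq_iff zero_le_power2)
    have q: "- mw * nv \<le> q" using b(3) mw by (metis abs_le_iff minus_le_iff)
    have qr: "lo * nv \<le> qr" using br(3) lo nvr by auto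
    have c0: "0 \<le> c" unfolding c_def using lo mw0 by simp
    have "c * (lo * nv) \<le> c * qr" using qr c0 by (rule mult_left_mono)
    then have "c * lo * nv \<le> c * qr" by (simp add: mult.assoc)
    moreover have "mw * nv \<le> c * lo * nv" using clo nv0 by (intro mult_right_mono) auto
    ultimately have pos: "0 \<le> q + c * qr" using q by linarith
    have "map_vec cnj v \<bullet> (\<sigma> *\<^sub>v v) = ip v (\<sigma> *\<^sub>v v)" using sc v by (intro ip_cnj) auto
    also have "\<dots> = complex_of_real ((q + c * qr) / t)"
      unfolding \<sigma>_def using W rc v b br by (simp add: ip_add_mat[of _ d] ip_smult_mat[of _ d] field_simps)
    finally show ?thesis using pos tpos by (intro exI[of _ "(q + c * qr) / t"]) auto
  qed
  have "N \<sigma> = \<sigma>"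
    unfolding \<sigma>_def using W rc rs lin by (simp add: islin_add_apply islin_smult_apply)
  then have "\<sigma> \<in> fixed_points d N" unfolding fixed_points_def is_state_def using sc sadj str spsd by auto
  then have "\<sigma> = \<rho>" using fp by auto
  then have "W = complex_of_real (t - c) \<cdot>\<^sub>m \<rho>"
  proof -
    assume e: "\<sigma> = \<rho>"
    show ?thesis
    proof (rule eq_matI)
      fix i j assume "i < dim_row (complex_of_real (t - c) \<cdot>\<^sub>m \<rho>)" "j < dim_col (complex_of_real (t - c) \<cdot>\<^sub>m \<rho>)"
      then have ij: "i < d" "j < d" using rc by auto
      have "\<sigma> $$ (i,j) = \<rho> $$ (i,j)" using e by simp
      then have "(W $$ (i,j) + of_real c * \<rho> $$ (i,j)) / of_real t = \<rho> $$ (i,j)"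
        unfolding \<sigma>_def using ij W rc by simp
      then show "W $$ (i,j) = (complex_of_real (t - c) \<cdot>\<^sub>m \<rho>) $$ (i,j)"
        using ij rc tpos by (simp add: field_simps)
    qed (use W rc in auto)
  qed
  then show ?thesis by blast
qed

lemma fixed_rho: assumes N: "quantum_channel d N" and fp: "fixed_points d N = {\<rho>}"
  and V: "unitary d V" "length \<mu> = d" "\<forall>x\<in>set \<mu>. x > 0" "\<rho> = V * diag_of (map complex_of_real \<mu>) * adj V"
  and d: "d > 0"
  and Z: "Z \<in> carrier_mat d d" "N Z = Z"
  shows "\<exists>c. Z = c \<cdot>\<^sub>m \<rho>"
proof -
  have rc: "\<rho> \<in> carrier_mat d d" using fp unfolding fixed_points_def is_state_def by auto
  have lin: "islin d N" using islin_channel[OF N] .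
  obtain Ks where K: "kraus_rep d Ks N" using N unfolding quantum_channel_def by blast
  have NZa: "N (adj Z) = adj Z" using kraus_adj[OF K Z(1)] Z by simp
  define W1 where "W1 = Z + adj Z"
  define W2 where "W2 = \<i> \<cdot>\<^sub>m Z + (- \<i>) \<cdot>\<^sub>m adj Z"
  have W1: "W1 \<in> carrier_mat d d" "adj W1 = W1" "N W1 = W1"
    unfolding W1_def using Z NZa by (auto simp: adj_add[of _ d d] comm_add_mat[of _ d d] islin_add_apply[OF lin])
  have W2: "W2 \<in> carrier_mat d d" "adj W2 = W2" "N W2 = W2"
    unfolding W2_def using Z NZa
    by (auto simp: adj_add[of _ d d] adj_smult comm_add_mat[of _ d d] islin_add_apply[OF lin] islin_smult_apply[OF lin])
  obtain c1 where c1: "W1 = c1 \<cdot>\<^sub>m \<rho>" using herm_fixed_rho[OF N fp V d W1] by blast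
  obtain c2 where c2: "W2 = c2 \<cdot>\<^sub>m \<rho>" using herm_fixed_rho[OF N fp V d W2] by blast
  have "Z = ((c1 - \<i> * c2) / 2) \<cdot>\<^sub>m \<rho>"
  proof (rule eq_matI)
    fix i j assume "i < dim_row (((c1 - \<i> * c2) / 2) \<cdot>\<^sub>m \<rho>)" "j < dim_col (((c1 - \<i> * c2) / 2) \<cdot>\<^sub>m \<rho>)"
    then have ij: "i < d" "j < d" using rc by auto
    have e1: "Z $$ (i,j) + cnj (Z $$ (j,i)) = c1 * \<rho> $$ (i,j)"
      using arg_cong[OF c1, of "\<lambda>X. X $$ (i,j)"] ij Z rc unfolding W1_def by simp
    have e2: "\<i> * Z $$ (i,j) - \<i> * cnj (Z $$ (j,i)) = c2 * \<rho> $$ (i,j)"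
      using arg_cong[OF c2, of "\<lambda>X. X $$ (i,j)"] ij Z rc unfolding W2_def by simp
    have "2 * Z $$ (i,j) = c1 * \<rho> $$ (i,j) - \<i> * (c2 * \<rho> $$ (i,j))"
      unfolding e1[symmetric] e2[symmetric] by (simp add: algebra_simps)
    then show "Z $$ (i,j) = (((c1 - \<i> * c2) / 2) \<cdot>\<^sub>m \<rho>) $$ (i,j)"
      using ij rc by (simp add: field_simps)
  qed (use Z rc in auto)
  then show ?thesis by blast
qed


lemma fro_smult_right: "A \<in> carrier_mat d d \<Longrightarrow> B \<in> carrier_mat d d \<Longrightarrow> fro A (c \<cdot>\<^sub>m B) = c * fro A B"
  unfolding fro_def by (simp add: mult_smult_distrib[of _ d d] mtrace_smult[of _ d])

lemma fro_pos: assumes "X \<in> carrier_mat d d" "X \<noteq> 0\<^sub>m d d"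
  shows "\<exists>r>0. fro X X = complex_of_real r"
proof -
  have v: "vecm d X \<noteq> 0\<^sub>v (d * d)"
  proof
    assume "vecm d X = 0\<^sub>v (d * d)"
    then have "vecm d X = vecm d (0\<^sub>m d d)" using vecm_zero by simp
    then show False using vecm_inj[OF assms(1), of "0\<^sub>m d d"] assms by simp
  qed
  have "fro X X = complex_of_real ((vnorm (vecm d X))^2)" using fro_vecm[OF assms(1) assms(1)] ip_vnorm by simp
  moreover have "vnorm (vecm d X) > 0" using vnorm_pos[OF vecm_carrier v] .
  ultimately show ?thesis by (intro exI[of _ "(vnorm (vecm d X))^2"]) auto
qed

lemma partB:
  fixes d :: nat and H :: "complex mat" and \<beta> s :: real and M N :: "complex mat \<Rightarrow> complex mat"
  assumes H: "H \<in> carrier_mat d d" "hermitian H" and d: "d > 0"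
    and M: "quantum_channel d M" "detailed_balance d (gibbs \<beta> H) s M"
    and N: "quantum_channel d N" "detailed_balance d (gibbs \<beta> H) s N"
    and fpN: "fixed_points d N = {gibbs \<beta> H}"
    and spN: "channel_spectrum d N \<subseteq> complex_of_real ` {0..1}"
  shows "fixed_points d (M \<circ> N \<circ> M) = {gibbs \<beta> H} \<and> channel_spectrum d (M \<circ> N \<circ> M) \<subseteq> complex_of_real ` {0..1}"
proof -
  define \<rho> where "\<rho> = gibbs \<beta> H"
  obtain V \<mu> where V: "unitary d V" "length \<mu> = d" "\<forall>x\<in>set \<mu>. x > 0" "\<rho> = V * diag_of (map complex_of_real \<mu>) * adj V"
    "\<forall>t. mat_rpow \<rho> t = V * diag_of (map (\<lambda>x. complex_of_real (x powr t)) \<mu>) * adj V"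
    using gibbs_setup[OF H d, of \<beta>] unfolding \<rho>_def by blast
  have rpow: "mat_rpow \<rho> t = fc V \<mu> (\<lambda>x. x powr t)" for t using V(5) unfolding fc_def by simp
  have fcc: "fc V \<mu> g \<in> carrier_mat d d" for g using fc_carrier[OF V(1) V(2)] .
  have fcpow: "fc V \<mu> (\<lambda>x. x powr p) * fc V \<mu> (\<lambda>x. x powr q) = fc V \<mu> (\<lambda>x. x powr (p + q))" for p q
    unfolding fc_mult[OF V(1) V(2)] by (simp add: powr_add)
  have fc0: "fc V \<mu> (\<lambda>x. x powr 0) = 1\<^sub>m d"
  proof -
    have "fc V \<mu> (\<lambda>x. x powr 0) = fc V \<mu> (\<lambda>x. 1)" using V(3) by (intro fc_cong) auto
    then show ?thesis using fc_one[OF V(1) V(2)] by simp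
  qed
  have fc1: "fc V \<mu> (\<lambda>x. x powr 1) = \<rho>"
  proof -
    have "fc V \<mu> (\<lambda>x. x powr 1) = fc V \<mu> (\<lambda>x. x)" using V(3) by (intro fc_cong) auto
    then show ?thesis using V(4) unfolding fc_def by simp
  qed
  define a where "a = (1 - s) / 2"
  define b where "b = s / 2"
  define Ph where "Ph = fc V \<mu> (\<lambda>x. x powr a)"
  define Qh where "Qh = fc V \<mu> (\<lambda>x. x powr b)"
  define Phi where "Phi = fc V \<mu> (\<lambda>x. x powr (- a))"
  define Qhi where "Qhi = fc V \<mu> (\<lambda>x. x powr (- b))"
  have Ph: "Ph \<in> carrier_mat d d" "adj Ph = Ph" unfolding Ph_def using fcc fc_adj[OF V(1) V(2)] by auto
  have Qh: "Qh \<in> carrier_mat d d" "adj Qh = Qh" unfolding Qh_def using fcc fc_adj[OF V(1) V(2)] by auto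
  have Phi: "Phi \<in> carrier_mat d d" unfolding Phi_def using fcc by auto
  have Qhi: "Qhi \<in> carrier_mat d d" unfolding Qhi_def using fcc by auto
  have inv: "Ph * Phi = 1\<^sub>m d" "Phi * Ph = 1\<^sub>m d" "Qh * Qhi = 1\<^sub>m d" "Qhi * Qh = 1\<^sub>m d"
    unfolding Ph_def Qh_def Phi_def Qhi_def fcpow using fc0 by simp_all
  have PP: "Ph * Ph = mat_rpow \<rho> (1 - s)" unfolding Ph_def fcpow rpow
    by (rule arg_cong[where f="\<lambda>p. fc V \<mu> (\<lambda>x. x powr p)"]) (simp add: a_def)
  have QQ: "Qh * Qh = mat_rpow \<rho> s" unfolding Qh_def fcpow rpow
    by (rule arg_cong[where f="\<lambda>p. fc V \<mu> (\<lambda>x. x powr p)"]) (simp add: b_def)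
  have rhoPQ: "Ph * Ph * (Qh * Qh) = \<rho>" unfolding PP QQ rpow fcpow using fc1 by simp
  have dbM: "\<forall>A\<in>carrier_mat d d. \<forall>B\<in>carrier_mat d d. mtrace (adj A * (Ph * Ph) * channel_dual d M B * (Qh * Qh)) = mtrace (adj (channel_dual d M A) * (Ph * Ph) * B * (Qh * Qh))"
    using M(2) unfolding detailed_balance_def s_inner_def PP QQ \<rho>_def by blast
  have dbN: "\<forall>A\<in>carrier_mat d d. \<forall>B\<in>carrier_mat d d. mtrace (adj A * (Ph * Ph) * channel_dual d N B * (Qh * Qh)) = mtrace (adj (channel_dual d N A) * (Ph * Ph) * B * (Qh * Qh))"
    using N(2) unfolding detailed_balance_def s_inner_def PP QQ \<rho>_def by blast
  define LM where "LM = opL d Ph Qh Phi Qhi M"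
  define LN where "LN = opL d Ph Qh Phi Qhi N"
  note opsM = main_ops[OF M(1) Ph Qh Phi Qhi inv dbM, folded LM_def]
  note opsN = main_ops[OF N(1) Ph Qh Phi Qhi inv dbN, folded LN_def]
  have LMc: "LM X \<in> carrier_mat d d" if "X \<in> carrier_mat d d" for X using islin_carrier[OF opsM(1) that] .
  have LNc: "LN X \<in> carrier_mat d d" if "X \<in> carrier_mat d d" for X using islin_carrier[OF opsN(1) that] .
  have r1: "X * Qh * Qhi = X" "X * Qhi * Qh = X" if "X \<in> carrier_mat d d" for X
    using that Qh Qhi inv by (simp_all add: assoc_mult_mat[of _ d d _ d _ d])
  have bk: "Ph * (Phi * X * Qhi) * Qh = X" if X: "X \<in> carrier_mat d d" for X
  proof -
    have "Ph * (Phi * X * Qhi) * Qh = Ph * (Phi * X) * Qhi * Qh"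
      using X Ph Phi Qh Qhi by (simp add: assoc_mult_mat[of _ d d _ d _ d])
    also have "\<dots> = X" using cancel_sq[OF inv(1) Ph(1) Phi X] r1 X Ph Phi Qh Qhi
      by (simp add: assoc_mult_mat[of _ d d _ d _ d])
    finally show ?thesis .
  qed
  have fw: "Phi * (Ph * X * Qh) * Qhi = X" if X: "X \<in> carrier_mat d d" for X
  proof -
    have "Phi * (Ph * X * Qh) * Qhi = Phi * (Ph * X) * Qh * Qhi"
      using X Ph Phi Qh Qhi by (simp add: assoc_mult_mat[of _ d d _ d _ d])
    also have "\<dots> = X" using cancel_sq[OF inv(2) Phi Ph(1) X] r1 X Ph Phi Qh Qhi
      by (simp add: assoc_mult_mat[of _ d d _ d _ d])
    finally show ?thesis .
  qed
  have phinj: "X = Y" if "X \<in> carrier_mat d d" "Y \<in> carrier_mat d d" "Ph * X * Qh = Ph * Y * Qh" for X Y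
  proof -
    have "X = Phi * (Ph * X * Qh) * Qhi" by (rule fw[OF that(1), symmetric])
    also have "\<dots> = Phi * (Ph * Y * Qh) * Qhi" by (simp only: that(3))
    also have "\<dots> = Y" by (rule fw[OF that(2)])
    finally show ?thesis .
  qed
  have phsm: "Ph * (c \<cdot>\<^sub>m X) * Qh = c \<cdot>\<^sub>m (Ph * X * Qh)" if "X \<in> carrier_mat d d" for c X
    using that Ph Qh by (simp add: mult_smult_distrib[of _ d d] mult_smult_assoc_mat[of _ d d])
  have phnz: "Ph * X * Qh \<noteq> 0\<^sub>m d d" if "X \<in> carrier_mat d d" "X \<noteq> 0\<^sub>m d d" for X
  proof
    assume "Ph * X * Qh = 0\<^sub>m d d"
    then have "X = Phi * 0\<^sub>m d d * Qhi" using fw[OF that(1)] by simp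
    then show False using that Phi Qhi by simp
  qed
  define R0 where "R0 = Ph * Qh"
  have R0: "R0 \<in> carrier_mat d d" unfolding R0_def using Ph Qh by simp
  have rhoR0: "\<rho> = Ph * R0 * Qh" unfolding R0_def using rhoPQ Ph Qh by (simp add: assoc_mult_mat[of _ d d _ d _ d])
  have Mrho: "M \<rho> = \<rho>"
  proof -
    have "M (Ph * Ph * 1\<^sub>m d * (Qh * Qh)) = Ph * Ph * channel_dual d M (1\<^sub>m d) * (Qh * Qh)"
      using gamma_rel[OF M(1) Ph Qh dbM] by simp
    then show ?thesis using dual_one[OF M(1)] rhoPQ Ph by simp
  qed
  have LMR0: "LM R0 = R0"
  proof (rule phinj[OF LMc[OF R0] R0])
    show "Ph * LM R0 * Qh = Ph * R0 * Qh" using opsM(3)[OF R0] Mrho rhoR0 by simp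
  qed
  have rs: "is_state d \<rho>" "N \<rho> = \<rho>" using fpN unfolding fixed_points_def \<rho>_def by auto
  have rc: "\<rho> \<in> carrier_mat d d" "mtrace \<rho> = 1" using rs unfolding is_state_def by auto
  obtain WM lM where WM: "unitary (d * d) WM" "length lM = d * d"
    "\<forall>X\<in>carrier_mat d d. vecm d (LM X) = (WM * diag_of (map complex_of_real lM) * adj WM) *\<^sub>v vecm d X"
    "\<forall>i<d * d. \<exists>X\<in>carrier_mat d d. X \<noteq> 0\<^sub>m d d \<and> LM X = complex_of_real (lM ! i) \<cdot>\<^sub>m X"
    using op_decomp[OF opsM(1) opsM(2)] by blast
  obtain WN lN where WN: "unitary (d * d) WN" "length lN = d * d"
    "\<forall>X\<in>carrier_mat d d. vecm d (LN X) = (WN * diag_of (map complex_of_real lN) * adj WN) *\<^sub>v vecm d X"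
    "\<forall>i<d * d. \<exists>X\<in>carrier_mat d d. X \<noteq> 0\<^sub>m d d \<and> LN X = complex_of_real (lN ! i) \<cdot>\<^sub>m X"
    using op_decomp[OF opsN(1) opsN(2)] by blast
  have lNb: "\<forall>x\<in>set lN. 0 \<le> x \<and> x \<le> 1"
  proof
    fix x assume "x \<in> set lN"
    then obtain i where i: "i < d * d" "x = lN ! i" using WN(2) by (auto simp: in_set_conv_nth)
    obtain X where X: "X \<in> carrier_mat d d" "X \<noteq> 0\<^sub>m d d" "LN X = complex_of_real x \<cdot>\<^sub>m X" using WN(4) i by blast
    have "N (Ph * X * Qh) = complex_of_real x \<cdot>\<^sub>m (Ph * X * Qh)" using opsN(3)[OF X(1)] X(3) phsm[OF X(1)] by simp
    then have "complex_of_real x \<in> channel_spectrum d N"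
      unfolding channel_spectrum_def using phnz[OF X(1) X(2)] X(1) Ph Qh by auto
    then show "0 \<le> x \<and> x \<le> 1" using spN by auto
  qed
  have lMb: "\<forall>x\<in>set lM. \<bar>x\<bar> \<le> 1"
  proof
    fix x assume "x \<in> set lM"
    then obtain i where i: "i < d * d" "x = lM ! i" using WM(2) by (auto simp: in_set_conv_nth)
    obtain X where X: "X \<in> carrier_mat d d" "X \<noteq> 0\<^sub>m d d" "LM X = complex_of_real x \<cdot>\<^sub>m X" using WM(4) i by blast
    define Y where "Y = Phi * X * Qhi"
    have Y: "Y \<in> carrier_mat d d" unfolding Y_def using X Phi Qhi by simp
    have XY: "X = Ph * Y * Qh" unfolding Y_def using bk[OF X(1)] by simp
    have Yn: "Y \<noteq> 0\<^sub>m d d" using X(2) XY Ph Qh Y by auto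
    have MY: "channel_dual d M Y \<in> carrier_mat d d" using channel_dual_carrier[OF M(1) Y] .
    have LMX: "LM X = Ph * channel_dual d M Y * Qh" unfolding LM_def opL_def Y_def ..
    have "Ph * channel_dual d M Y * Qh = Ph * (complex_of_real x \<cdot>\<^sub>m Y) * Qh"
      using X(3) unfolding LMX using phsm[OF Y] XY by simp
    then have "channel_dual d M Y = complex_of_real x \<cdot>\<^sub>m Y" using phinj[OF MY] Y by simp
    then show "\<bar>x\<bar> \<le> 1" using dual_eig_bound[OF M(1) Y Yn] by simp
  qed
  have QN: "\<exists>q nv. fro X (LN X) = of_real q \<and> fro X X = of_real nv \<and> 0 \<le> q \<and> q \<le> nv" if X: "X \<in> carrier_mat d d" for X
  proof -
    obtain q nv where b: "ip (vecm d X) ((WN * diag_of (map complex_of_real lN) * adj WN) *\<^sub>v vecm d X) = of_real q"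
      "ip (vecm d X) (vecm d X) = of_real nv"
      "\<forall>lo. (\<forall>x\<in>set lN. lo \<le> x) \<longrightarrow> lo * nv \<le> q" "\<forall>hi. (\<forall>x\<in>set lN. x \<le> hi) \<longrightarrow> q \<le> hi * nv"
      using herm_quad_bounds[OF WN(1) WN(2) refl vecm_carrier] by blast
    have "fro X (LN X) = of_real q" using fro_vecm[OF X LNc[OF X]] WN(3) X b(1) by simp
    moreover have "fro X X = of_real nv" using fro_vecm[OF X X] b(2) by simp
    moreover have "0 \<le> q" using b(3) lNb by force
    moreover have "q \<le> nv" using b(4) lNb by force
    ultimately show ?thesis by blast
  qed
  have QN2: "LN X = X" if X: "X \<in> carrier_mat d d" and eq: "fro X (LN X) = fro X X" for X
  proof (rule vecm_inj[OF LNc[OF X] X])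
    have "ip (vecm d X) ((WN * diag_of (map complex_of_real lN) * adj WN) *\<^sub>v vecm d X) = ip (vecm d X) (vecm d X)"
      using eq fro_vecm[OF X LNc[OF X]] fro_vecm[OF X X] WN(3) X by simp
    then have "(WN * diag_of (map complex_of_real lN) * adj WN) *\<^sub>v vecm d X = vecm d X"
      using herm_fix[OF WN(1) WN(2) refl vecm_carrier] lNb by blast
    then show "vecm d (LN X) = vecm d X" using WN(3) X by simp
  qed
  have QM: "\<exists>n1 n0. fro (LM X) (LM X) = of_real n1 \<and> fro X X = of_real n0 \<and> n1 \<le> n0" if X: "X \<in> carrier_mat d d" for X
  proof -
    define c where "c = adj WM *\<^sub>v vecm d X"
    note h = herm_quad[OF WM(1) WM(2) refl vecm_carrier, of X, folded c_def]
    have "fro (LM X) (LM X) = of_real (\<Sum>i<d * d. (lM ! i)^2 * (cmod (c $ i))^2)"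
      using fro_vecm[OF LMc[OF X] LMc[OF X]] WM(3) X h(3) by simp
    moreover have "fro X X = of_real (\<Sum>i<d * d. (cmod (c $ i))^2)"
      using fro_vecm[OF X X] h(2) by simp
    moreover have "(\<Sum>i<d * d. (lM ! i)^2 * (cmod (c $ i))^2) \<le> (\<Sum>i<d * d. (cmod (c $ i))^2)"
    proof (rule sum_mono)
      fix i assume "i \<in> {..<d * d}"
      then have "\<bar>lM ! i\<bar> \<le> 1" using lMb WM(2) by auto
      then have "(lM ! i)^2 \<le> 1" using abs_square_le_1 by blast
      then show "(lM ! i)^2 * (cmod (c $ i))^2 \<le> (cmod (c $ i))^2"
        using mult_right_mono[of "(lM ! i)^2" 1 "(cmod (c $ i))^2"] by simp
    qed
    ultimately show ?thesis by blast
  qed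
  have MNMc: "(M \<circ> N \<circ> M) (Ph * Y * Qh) = Ph * LM (LN (LM Y)) * Qh" if Y: "Y \<in> carrier_mat d d" for Y
    using opsM(3)[OF Y] opsN(3)[OF LMc[OF Y]] opsM(3)[OF LNc[OF LMc[OF Y]]] by simp
  have key: "\<exists>q nv n0. fro Y (LM (LN (LM Y))) = of_real q \<and> fro (LM Y) (LN (LM Y)) = of_real q \<and>
      fro (LM Y) (LM Y) = of_real nv \<and> fro Y Y = of_real n0 \<and> 0 \<le> q \<and> q \<le> nv \<and> nv \<le> n0"
    if Y: "Y \<in> carrier_mat d d" for Y
  proof -
    have e: "fro Y (LM (LN (LM Y))) = fro (LM Y) (LN (LM Y))" using opsM(2)[OF Y LNc[OF LMc[OF Y]]] by simp
    obtain q nv where q: "fro (LM Y) (LN (LM Y)) = of_real q" "fro (LM Y) (LM Y) = of_real nv" "0 \<le> q" "q \<le> nv"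
      using QN[OF LMc[OF Y]] by blast
    obtain n1 n0 where n: "fro (LM Y) (LM Y) = of_real n1" "fro Y Y = of_real n0" "n1 \<le> n0" using QM[OF Y] by blast
    have "nv = n1" using q(2) n(1) by simp
    then show ?thesis using e q n by (intro exI[of _ q] exI[of _ nv] exI[of _ n0]) auto
  qed
  have fp: "fixed_points d (M \<circ> N \<circ> M) = {\<rho>}"
  proof (intro equalityI subsetI)
    fix \<sigma> assume "\<sigma> \<in> {\<rho>}"
    then show "\<sigma> \<in> fixed_points d (M \<circ> N \<circ> M)" using rs Mrho unfolding fixed_points_def by auto
  next
    fix \<sigma> assume "\<sigma> \<in> fixed_points d (M \<circ> N \<circ> M)"
    then have st: "is_state d \<sigma>" and fx: "M (N (M \<sigma>)) = \<sigma>" unfolding fixed_points_def by auto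
    have sc: "\<sigma> \<in> carrier_mat d d" "mtrace \<sigma> = 1" using st unfolding is_state_def by auto
    define Y where "Y = Phi * \<sigma> * Qhi"
    have Y: "Y \<in> carrier_mat d d" unfolding Y_def using sc Phi Qhi by simp
    have sY: "\<sigma> = Ph * Y * Qh" unfolding Y_def using bk[OF sc(1)] by simp
    define Y1 where "Y1 = LM Y"
    have Y1: "Y1 \<in> carrier_mat d d" unfolding Y1_def using LMc[OF Y] .
    have fixY: "LM (LN Y1) = Y"
    proof (rule phinj[OF LMc[OF LNc[OF Y1]] Y])
      show "Ph * LM (LN Y1) * Qh = Ph * Y * Qh" using MNMc[OF Y] fx sY unfolding Y1_def by simp
    qed
    obtain q nv n0 where k: "fro Y (LM (LN (LM Y))) = of_real q" "fro (LM Y) (LN (LM Y)) = of_real q"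
      "fro (LM Y) (LM Y) = of_real nv" "fro Y Y = of_real n0" "0 \<le> q" "q \<le> nv" "nv \<le> n0"
      using key[OF Y] by blast
    have "q = n0" using k(1) k(4) fixY unfolding Y1_def by simp
    then have "q = nv" using k by simp
    then have "fro Y1 (LN Y1) = fro Y1 Y1" using k(2) k(3) unfolding Y1_def by simp
    then have LNY1: "LN Y1 = Y1" using QN2[OF Y1] by simp
    have "N (Ph * Y1 * Qh) = Ph * Y1 * Qh" using opsN(3)[OF Y1] LNY1 by simp
    then obtain \<kappa> where ka: "Ph * Y1 * Qh = \<kappa> \<cdot>\<^sub>m \<rho>"
      using fixed_rho[OF N(1) fpN[folded \<rho>_def] V(1-4) d, of "Ph * Y1 * Qh"] Y1 Ph Qh by auto
    have "Ph * Y1 * Qh = Ph * (\<kappa> \<cdot>\<^sub>m R0) * Qh" using ka rhoR0 phsm[OF R0] by simp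
    then have Y1k: "Y1 = \<kappa> \<cdot>\<^sub>m R0" using phinj[OF Y1] R0 by simp
    have "Y = LM Y1" using fixY LNY1 by simp
    also have "\<dots> = \<kappa> \<cdot>\<^sub>m R0" unfolding Y1k using islin_smult_apply[OF opsM(1) R0] LMR0 by simp
    finally have "\<sigma> = \<kappa> \<cdot>\<^sub>m \<rho>" using sY phsm[OF R0] rhoR0 by simp
    moreover have "\<kappa> = 1" using calculation sc(2) rc mtrace_smult[OF rc(1)] by simp
    moreover have "1 \<cdot>\<^sub>m \<rho> = \<rho>" by (rule eq_matI) auto
    ultimately show "\<sigma> \<in> {\<rho>}" by simp
  qed
  have sp: "channel_spectrum d (M \<circ> N \<circ> M) \<subseteq> complex_of_real ` {0..1}"
  proof
    fix c assume "c \<in> channel_spectrum d (M \<circ> N \<circ> M)"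
    then obtain X where X: "X \<in> carrier_mat d d" "X \<noteq> 0\<^sub>m d d" "(M \<circ> N \<circ> M) X = c \<cdot>\<^sub>m X"
      unfolding channel_spectrum_def by blast
    define Y where "Y = Phi * X * Qhi"
    have Y: "Y \<in> carrier_mat d d" unfolding Y_def using X Phi Qhi by simp
    have XY: "X = Ph * Y * Qh" unfolding Y_def using bk[OF X(1)] by simp
    have Yn: "Y \<noteq> 0\<^sub>m d d" using X(2) XY Ph Qh Y by auto
    have ev: "LM (LN (LM Y)) = c \<cdot>\<^sub>m Y"
    proof (rule phinj[OF LMc[OF LNc[OF LMc[OF Y]]]])
      show "c \<cdot>\<^sub>m Y \<in> carrier_mat d d" using Y by simp
      show "Ph * LM (LN (LM Y)) * Qh = Ph * (c \<cdot>\<^sub>m Y) * Qh" using MNMc[OF Y] X(3) XY phsm[OF Y] by simp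
    qed
    obtain q nv n0 where k: "fro Y (LM (LN (LM Y))) = of_real q"
      "fro Y Y = of_real n0" "0 \<le> q" "q \<le> nv" "nv \<le> n0"
      using key[OF Y] by blast
    obtain r where r: "r > 0" "fro Y Y = of_real r" using fro_pos[OF Y Yn] by blast
    have rn: "r = n0" using r(2) k(2) by simp
    have "c * of_real r = of_real q" using k(1) ev fro_smult_right[OF Y Y] r(2) by simp
    then have "c = of_real (q / r)" using r(1) by (simp add: field_simps)
    moreover have "q / r \<in> {0..1}" using k rn r(1) by (auto simp: divide_le_eq_1)
    ultimately show "c \<in> complex_of_real ` {0..1}" by blast
  qed
  show ?thesis using fp sp unfolding \<rho>_def by simp
qed


theorem lemma4p1:
  fixes n :: nat and H :: "complex mat" and \<beta> s :: real
    and M N :: "complex mat \<Rightarrow> complex mat"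
  assumes H: "H \<in> carrier_mat (2^n) (2^n)" "hermitian H"
    and beta: "\<beta> > 0"
    and s: "0 \<le> s" "s \<le> 1"
    and M: "quantum_channel (2^n) M" "detailed_balance (2^n) (gibbs \<beta> H) s M"
    and N: "quantum_channel (2^n) N" "detailed_balance (2^n) (gibbs \<beta> H) s N"
  shows "detailed_balance (2^n) (gibbs \<beta> H) s (M \<circ> N \<circ> M)
    \<and> (fixed_points (2^n) N = {gibbs \<beta> H} \<and> channel_spectrum (2^n) N \<subseteq> complex_of_real ` {0..1}
       \<longrightarrow> fixed_points (2^n) (M \<circ> N \<circ> M) = {gibbs \<beta> H}
           \<and> channel_spectrum (2^n) (M \<circ> N \<circ> M) \<subseteq> complex_of_real ` {0..1})"
proof -
  have d: "(2::nat) ^ n > 0" by simp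
  show ?thesis using db_MNM[OF M(1) M(2) N(1) N(2)] partB[OF H d M N] by blast
qed

end
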